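(* Let $K$ be a field, $Q$ a type $A$ quiver of arbitrary orientation, $\mathbf{d}$ a dimension vector for $Q$, and let $\tilde Q$, $\tilde{\mathbf{d}}$, $G^*$, $U$ and $\pi\colon U\to\mathrm{rep}_Q(\mathbf{d})$ be as described below. Then $\pi$ induces a bijection between the $\mathbf{GL}(\tilde{\mathbf{d}})$-orbits in $U$ and the $\mathbf{GL}(\mathbf{d})$-orbits in $\mathrm{rep}_Q(\mathbf{d})$ (namely $\mathcal{O}\mapsto \pi^{-1}(\mathcal{O})$ is inverse to $\mathcal{O}'\mapsto\pi(\mathcal{O}')$), and likewise a bijection between orbit closures in $U$ and orbit closures in $\mathrm{rep}_Q(\mathbf{d})$. Moreover, for each orbit $\mathcal{O}\subseteq\mathrm{rep}_Q(\mathbf{d})$, the closure of $\pi^{-1}(\mathcal{O})$ in $U$ is isomorphic to $G^*\times\overline{\mathcal{O}}$.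
   Context: Label the vertices of $Q$ along the line as $z_0,\dots,z_n$ and the arrows as $\gamma_1,\dots,\gamma_n$, with $\gamma_i$ joining $z_{i-1}$ and $z_i$ (in either direction). $\mathrm{rep}_Q(\mathbf{d})=\prod_{a}\mathrm{Mat}_{\mathbf{d}(ha)\times\mathbf{d}(ta)}(K)$ with $\mathbf{GL}(\mathbf{d})=\prod_v\mathbf{GL}_{\mathbf{d}(v)}(K)$ acting by $g\cdot V=(g_{ha}V_ag_{ta}^{-1})_a$. The quiver $\tilde Q$ is obtained from $Q$ as follows: for each $i$ with $z_{i-1}\xrightarrow{\gamma_i}z_i\xrightarrow{\gamma_{i+1}}z_{i+1}$, add a new vertex $w_i$ and arrow $\delta_i$ and replace $\gamma_i$ by $\gamma_i\colon z_{i-1}\to w_i$, with $\delta_i\colon z_i\to w_i$ (a new sink); for each $i$ with $z_{i-1}\xleftarrow{\gamma_i}z_i\xleftarrow{\gamma_{i+1}}z_{i+1}$, add a new vertex $w_i$ and arrow $\delta_i$ and replace $\gamma_i$ by $\gamma_i\colon w_i\to z_{i-1}$, with $\delta_i\colon w_i\to z_i$ (a new source). All other arrows are kept; $\tilde Q$ is a bipartite type $A$ quiver. Set $\tilde{\mathbf{d}}(z_i)=\mathbf{d}(z_i)$, $\tilde{\mathbf{d}}(w_i)=\mathbf{d}(z_i)$, and $G^*=\prod_i\mathbf{GL}_{\tilde{\mathbf{d}}(w_i)}(K)$, so $\mathbf{GL}(\tilde{\mathbf{d}})=G^*\times\mathbf{GL}(\mathbf{d})$. Let $U\subseteq\mathrm{rep}_{\tilde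 Q}(\tilde{\mathbf{d}})$ be the open set of $\tilde V$ with every $V_{\delta_i}$ invertible, and define $\pi(\tilde V)=(X_{\gamma_i})_i$ where $X_{\gamma_i}=V_{\gamma_i}$ if no $w_i$ was inserted, $X_{\gamma_i}=V_{\delta_i}^{-1}V_{\gamma_i}$ in the new-sink case, and $X_{\gamma_i}=V_{\gamma_i}V_{\delta_i}^{-1}$ in the new-source case. *)

theory Defs
  imports "Jordan_Normal_Form.Matrix"
begin

record ('v, 'e) quiver =
  qverts :: "'v set"
  qarrs  :: "'e set"
  qsrc   :: "'e \<Rightarrow> 'v"
  qtgt   :: "'e \<Rightarrow> 'v"

definition minv :: "'a::field mat \<Rightarrow> 'a mat" where
  "minv A = (SOME B. B \<in> carrier_mat (dim_row A) (dim_row A) \<and> inverts_mat A B \<and> inverts_mat B A)"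

text \<open>rep_Q(d) = prod_a Mat_{d(ha) x d(ta)}(K); arrows outside the quiver carry a dummy value.\<close>
definition rep_space :: "('v, 'e) quiver \<Rightarrow> ('v \<Rightarrow> nat) \<Rightarrow> ('e \<Rightarrow> 'a::field mat) set" where
  "rep_space Q d = {V. (\<forall>a\<in>qarrs Q. V a \<in> carrier_mat (d (qtgt Q a)) (d (qsrc Q a)))
                      \<and> (\<forall>a. a \<notin> qarrs Q \<longrightarrow> V a = 0\<^sub>m 0 0)}"

definition GL :: "('v, 'e) quiver \<Rightarrow> ('v \<Rightarrow> nat) \<Rightarrow> ('v \<Rightarrow> 'a::field mat) set" where
  "GL Q d = {g. (\<forall>v\<in>qverts Q. g v \<in> carrier_mat (d v) (d v) \<and> invertible_mat (g v))
               \<and> (\<forall>v. v \<notin> qverts Q \<longrightarrow> g v = 1\<^sub>m 0)}"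

definition act :: "('v, 'e) quiver \<Rightarrow> ('v \<Rightarrow> 'a::field mat) \<Rightarrow> ('e \<Rightarrow> 'a mat) \<Rightarrow> ('e \<Rightarrow> 'a mat)" where
  "act Q g V = (\<lambda>a. if a \<in> qarrs Q then g (qtgt Q a) * V a * minv (g (qsrc Q a)) else V a)"

definition orbit :: "('v, 'e) quiver \<Rightarrow> ('v \<Rightarrow> nat) \<Rightarrow> ('e \<Rightarrow> 'a::field mat) \<Rightarrow> ('e \<Rightarrow> 'a mat) set" where
  "orbit Q d V = {act Q g V | g. g \<in> GL Q d}"

definition orbits_in :: "('v, 'e) quiver \<Rightarrow> ('v \<Rightarrow> nat) \<Rightarrow> ('e \<Rightarrow> 'a::field mat) set \<Rightarrow> ('e \<Rightarrow> 'a mat) set set" where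
  "orbits_in Q d S = {orbit Q d V | V. V \<in> S}"

text \<open>An affine space is described by its set of coordinate functions C; polynomial
  functions are generated by constants and coordinates under + and *.\<close>
inductive_set polys :: "('p \<Rightarrow> 'a::comm_ring_1) set \<Rightarrow> ('p \<Rightarrow> 'a) set" for C where
  const: "(\<lambda>_. c) \<in> polys C"
| coord: "f \<in> C \<Longrightarrow> f \<in> polys C"
| add:   "f \<in> polys C \<Longrightarrow> g \<in> polys C \<Longrightarrow> (\<lambda>x. f x + g x) \<in> polys C"
| mult:  "f \<in> polys C \<Longrightarrow> g \<in> polys C \<Longrightarrow> (\<lambda>x. f x * g x) \<in> polys C"

definition zcl :: "('p \<Rightarrow> 'a::comm_ring_1) set \<Rightarrow> 'p set \<Rightarrow> 'p set \<Rightarrow> 'p set" where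
  "zcl C X A = {x \<in> X. \<forall>f \<in> polys C. (\<forall>y\<in>A. f y = 0) \<longrightarrow> f x = 0}"

definition regular_fun :: "('p \<Rightarrow> 'a::field) set \<Rightarrow> 'p set \<Rightarrow> ('p \<Rightarrow> 'a) \<Rightarrow> bool" where
  "regular_fun C X f \<longleftrightarrow> (\<forall>x\<in>X. \<exists>p\<in>polys C. \<exists>q\<in>polys C. q x \<noteq> 0 \<and>
       (\<forall>y\<in>X. q y \<noteq> 0 \<longrightarrow> f y = p y / q y))"

definition regular_map :: "('p \<Rightarrow> 'a::field) set \<Rightarrow> 'p set \<Rightarrow> ('q \<Rightarrow> 'a) set \<Rightarrow> 'q set \<Rightarrow> ('p \<Rightarrow> 'q) \<Rightarrow> bool" where
  "regular_map C X D Y f \<longleftrightarrow> f ` X \<subseteq> Y \<and> (\<forall>c\<in>D. regular_fun C X (\<lambda>x. c (f x)))"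

definition var_iso :: "('p \<Rightarrow> 'a::field) set \<Rightarrow> 'p set \<Rightarrow> ('q \<Rightarrow> 'a) set \<Rightarrow> 'q set \<Rightarrow> bool" where
  "var_iso C X D Y \<longleftrightarrow> (\<exists>f g. regular_map C X D Y f \<and> regular_map D Y C X g
       \<and> (\<forall>x\<in>X. g (f x) = x) \<and> (\<forall>y\<in>Y. f (g y) = y))"

definition rep_coords :: "('v, 'e) quiver \<Rightarrow> ('v \<Rightarrow> nat) \<Rightarrow> (('e \<Rightarrow> 'a mat) \<Rightarrow> 'a) set" where
  "rep_coords Q d = {(\<lambda>V. V a $$ (i, j)) | a i j. a \<in> qarrs Q \<and> i < d (qtgt Q a) \<and> j < d (qsrc Q a)}"

definition prod_coords :: "('p \<Rightarrow> 'a) set \<Rightarrow> ('q \<Rightarrow> 'a) set \<Rightarrow> ('p \<times> 'q \<Rightarrow> 'a) set" where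
  "prod_coords C D = {(\<lambda>x. f (fst x)) | f. f \<in> C} \<union> {(\<lambda>x. g (snd x)) | g. g \<in> D}"

text \<open>Vertices z_0..z_n (numbers 0..n), arrows gamma_1..gamma_n (numbers 1..n);
  fw i means gamma_i : z_{i-1} -> z_i, otherwise gamma_i : z_i -> z_{i-1}.\<close>
definition typeA :: "nat \<Rightarrow> (nat \<Rightarrow> bool) \<Rightarrow> (nat, nat) quiver" where
  "typeA n fw = \<lparr> qverts = {0..n}, qarrs = {1..n},
                  qsrc = (\<lambda>i. if fw i then i - 1 else i),
                  qtgt = (\<lambda>i. if fw i then i else i - 1) \<rparr>"

definition sinkW :: "nat \<Rightarrow> (nat \<Rightarrow> bool) \<Rightarrow> nat set" where
  "sinkW n fw = {i. 1 \<le> i \<and> i + 1 \<le> n \<and> fw i \<and> fw (i + 1)}"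

definition sourceW :: "nat \<Rightarrow> (nat \<Rightarrow> bool) \<Rightarrow> nat set" where
  "sourceW n fw = {i. 1 \<le> i \<and> i + 1 \<le> n \<and> \<not> fw i \<and> \<not> fw (i + 1)}"

definition Wset :: "nat \<Rightarrow> (nat \<Rightarrow> bool) \<Rightarrow> nat set" where
  "Wset n fw = sinkW n fw \<union> sourceW n fw"

text \<open>Vertices: Inl i = z_i, Inr i = w_i; arrows: Inl i = gamma_i, Inr i = delta_i.\<close>
definition tildeQ :: "nat \<Rightarrow> (nat \<Rightarrow> bool) \<Rightarrow> (nat + nat, nat + nat) quiver" where
  "tildeQ n fw = \<lparr> qverts = Inl ` {0..n} \<union> Inr ` Wset n fw,
                   qarrs = Inl ` {1..n} \<union> Inr ` Wset n fw,
                   qsrc = (\<lambda>a. case a of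
                              Inl i \<Rightarrow> (if i \<in> sinkW n fw then Inl (i - 1)
                                        else if i \<in> sourceW n fw then Inr i
                                        else Inl (qsrc (typeA n fw) i))
                            | Inr i \<Rightarrow> (if i \<in> sinkW n fw then Inl i else Inr i)),
                   qtgt = (\<lambda>a. case a of
                              Inl i \<Rightarrow> (if i \<in> sinkW n fw then Inr i
                                        else if i \<in> sourceW n fw then Inl (i - 1)
                                        else Inl (qtgt (typeA n fw) i))
                            | Inr i \<Rightarrow> (if i \<in> sinkW n fw then Inr i else Inl i)) \<rparr>"

definition tilde_dim :: "(nat \<Rightarrow> nat) \<Rightarrow> (nat + nat \<Rightarrow> nat)" where
  "tilde_dim d = (\<lambda>v. case v of Inl i \<Rightarrow> d i | Inr i \<Rightarrow> d i)"

definition Gstar :: "nat \<Rightarrow> (nat \<Rightarrow> bool) \<Rightarrow> (nat \<Rightarrow> nat) \<Rightarrow> (nat \<Rightarrow> 'a::field mat) set" where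
  "Gstar n fw d = {g. (\<forall>i\<in>Wset n fw. g i \<in> carrier_mat (d i) (d i) \<and> invertible_mat (g i))
                     \<and> (\<forall>i. i \<notin> Wset n fw \<longrightarrow> g i = 1\<^sub>m 0)}"

definition Gstar_coords :: "nat \<Rightarrow> (nat \<Rightarrow> bool) \<Rightarrow> (nat \<Rightarrow> nat) \<Rightarrow> ((nat \<Rightarrow> 'a mat) \<Rightarrow> 'a) set" where
  "Gstar_coords n fw d = {(\<lambda>g. g i $$ (r, c)) | i r c. i \<in> Wset n fw \<and> r < d i \<and> c < d i}"

definition Uset :: "nat \<Rightarrow> (nat \<Rightarrow> bool) \<Rightarrow> (nat \<Rightarrow> nat) \<Rightarrow> (nat + nat \<Rightarrow> 'a::field mat) set" where
  "Uset n fw d = {V \<in> rep_space (tildeQ n fw) (tilde_dim d). \<forall>i\<in>Wset n fw. invertible_mat (V (Inr i))}"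

definition piQ :: "nat \<Rightarrow> (nat \<Rightarrow> bool) \<Rightarrow> (nat + nat \<Rightarrow> 'a::field mat) \<Rightarrow> (nat \<Rightarrow> 'a mat)" where
  "piQ n fw V = (\<lambda>i. if i \<in> {1..n} then
                       (if i \<in> sinkW n fw then minv (V (Inr i)) * V (Inl i)
                        else if i \<in> sourceW n fw then V (Inl i) * minv (V (Inr i))
                        else V (Inl i))
                     else 0\<^sub>m 0 0)"

end

theory Submission
  imports Defs "Jordan_Normal_Form.Determinant"
begin

lemma assoc_dim: "dim_col A = dim_row B \<Longrightarrow> dim_col B = dim_row C \<Longrightarrow> A * B * C = A * (B * (C::'a::semiring_0 mat))"
  by (rule assoc_mult_mat[of A "dim_row A" "dim_col A" B "dim_col B" C "dim_col C"]) auto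

lemma one_left_dim: "dim_row A = k \<Longrightarrow> 1\<^sub>m k * A = (A::'a::semiring_1 mat)"
  by (rule left_mult_one_mat[of A k "dim_col A"]) auto
lemma one_right_dim: "dim_col A = k \<Longrightarrow> A * 1\<^sub>m k = (A::'a::semiring_1 mat)"
  by (rule right_mult_one_mat[of A "dim_row A" k]) auto

lemma minv_unique:
  fixes A B :: "'a::field mat"
  assumes A: "A \<in> carrier_mat k k" and B: "B \<in> carrier_mat k k" and AB: "A * B = 1\<^sub>m k" and BA: "B * A = 1\<^sub>m k"
  shows "minv A = B"
proof -
  have P: "B \<in> carrier_mat (dim_row A) (dim_row A) \<and> inverts_mat A B \<and> inverts_mat B A"
    using A B AB BA by (auto simp: inverts_mat_def)
  have "minv A \<in> carrier_mat (dim_row A) (dim_row A) \<and> inverts_mat A (minv A) \<and> inverts_mat (minv A) A"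
    unfolding minv_def by (rule someI[of _ B], rule P)
  then have C: "minv A \<in> carrier_mat k k" "minv A * A = 1\<^sub>m k" using A by (auto simp: inverts_mat_def)
  have "minv A = minv A * (A * B)" using C AB by simp
  also have "\<dots> = (minv A * A) * B" using assoc_mult_mat[OF C(1) A B] by simp
  also have "\<dots> = B" using C B by simp
  finally show ?thesis .
qed

lemma invertible_intro:
  fixes A B :: "'a::field mat"
  assumes A: "A \<in> carrier_mat k k" and B: "B \<in> carrier_mat k k" and AB: "A * B = 1\<^sub>m k" and BA: "B * A = 1\<^sub>m k"
  shows "invertible_mat A"
  using assms unfolding invertible_mat_def inverts_mat_def square_mat.simps by auto

lemma minv_props:
  fixes A :: "'a::field mat"
  assumes A: "A \<in> carrier_mat k k" and I: "invertible_mat A"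
  shows "minv A \<in> carrier_mat k k" "A * minv A = 1\<^sub>m k" "minv A * A = 1\<^sub>m k"
proof -
  obtain B where AB: "A * B = 1\<^sub>m k" and BA: "B * A = 1\<^sub>m (dim_row B)"
    using I A unfolding invertible_mat_def inverts_mat_def by auto
  have "dim_col B = k" using arg_cong[OF AB, of dim_col] by simp
  moreover have "dim_row B = k" using arg_cong[OF BA, of dim_col] A by simp
  ultimately have B: "B \<in> carrier_mat k k" by auto
  have "minv A = B" using minv_unique[OF A B AB] BA B by auto
  then show "minv A \<in> carrier_mat k k" "A * minv A = 1\<^sub>m k" "minv A * A = 1\<^sub>m k"
    using B AB BA by auto
qed

lemma minv_mult:
  fixes A B :: "'a::field mat"
  assumes A: "A \<in> carrier_mat k k" and IA: "invertible_mat A"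
    and B: "B \<in> carrier_mat k k" and IB: "invertible_mat B"
  shows "invertible_mat (A * B)" "minv (A * B) = minv B * minv A"
proof -
  note a = minv_props[OF A IA] and b = minv_props[OF B IB]
  have 1: "(A * B) * (minv B * minv A) = 1\<^sub>m k"
    using A B a b by (simp add: assoc_dim one_left_dim flip: assoc_dim[of B "minv B"])
  have 2: "(minv B * minv A) * (A * B) = 1\<^sub>m k"
    using A B a b by (simp add: assoc_dim one_left_dim flip: assoc_dim[of "minv A" A])
  show "invertible_mat (A * B)" using invertible_intro[OF _ _ 1 2] A B a b by auto
  show "minv (A * B) = minv B * minv A" using minv_unique[OF _ _ 1 2] A B a b by auto
qed

lemma minv_minv:
  fixes A :: "'a::field mat"
  assumes A: "A \<in> carrier_mat k k" and IA: "invertible_mat A"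
  shows "invertible_mat (minv A)" "minv (minv A) = A"
  using minv_props[OF A IA] invertible_intro[of "minv A" k A] minv_unique[of "minv A" k A] A by auto

lemma one_invertible: "invertible_mat (1\<^sub>m k :: 'a::field mat)" "minv (1\<^sub>m k :: 'a::field mat) = 1\<^sub>m k"
  using invertible_intro[of "1\<^sub>m k" k "1\<^sub>m k"] minv_unique[of "1\<^sub>m k" k "1\<^sub>m k"] by auto

lemma minv_adj:
  fixes A :: "'a::field mat"
  assumes A: "A \<in> carrier_mat k k" and IA: "invertible_mat A"
  shows "det A \<noteq> 0" "minv A = (1 / det A) \<cdot>\<^sub>m adj_mat A"
proof -
  note a = minv_props[OF A IA]
  have "det A * det (minv A) = 1" using det_mult[OF A a(1)] a(2) by simp
  then show dA: "det A \<noteq> 0" by auto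
  let ?B = "(1 / det A) \<cdot>\<^sub>m adj_mat A"
  have B: "?B \<in> carrier_mat k k" using adj_mat(1)[OF A] by simp
  have "A * ?B = (1 / det A) \<cdot>\<^sub>m (A * adj_mat A)" using A adj_mat(1)[OF A] by (simp add: mult_smult_distrib)
  also have "\<dots> = 1\<^sub>m k" unfolding adj_mat(2)[OF A] using dA by (intro eq_matI) auto
  finally have 1: "A * ?B = 1\<^sub>m k" .
  have "?B * A = (1 / det A) \<cdot>\<^sub>m (adj_mat A * A)" using A adj_mat(1)[OF A] by (simp add: mult_smult_assoc_mat)
  also have "\<dots> = 1\<^sub>m k" unfolding adj_mat(3)[OF A] using dA by (intro eq_matI) auto
  finally have 2: "?B * A = 1\<^sub>m k" .
  show "minv A = ?B" using minv_unique[OF A B 1 2] .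
qed

lemma minv_entry:
  fixes A :: "'a::field mat"
  assumes A: "A \<in> carrier_mat k k" and IA: "invertible_mat A" and i: "i < k" and j: "j < k"
  shows "minv A $$ (i,j) = ((-1)^(j+i) * det (mat_delete A j i)) / det A"
  using minv_adj[OF A IA] A i j by (simp add: adj_mat_def cofactor_def)

definition poly_on :: "('p \<Rightarrow> 'a::field) set \<Rightarrow> 'p set \<Rightarrow> ('p \<Rightarrow> 'a) \<Rightarrow> bool" where
  "poly_on C S f \<longleftrightarrow> (\<exists>p\<in>polys C. \<forall>x\<in>S. f x = p x)"

definition frac_on :: "('p \<Rightarrow> 'a::field) set \<Rightarrow> 'p set \<Rightarrow> ('p \<Rightarrow> 'a) \<Rightarrow> bool" where
  "frac_on C S f \<longleftrightarrow> (\<exists>p\<in>polys C. \<exists>q\<in>polys C. \<forall>x\<in>S. q x \<noteq> 0 \<and> f x = p x / q x)"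

lemma poly_on_const: "poly_on C S (\<lambda>_. c)"
  unfolding poly_on_def by (intro bexI[of _ "\<lambda>_. c"]) (auto intro: polys.const)
lemma poly_on_coord: "f \<in> C \<Longrightarrow> poly_on C S f"
  unfolding poly_on_def by (blast intro: polys.coord)
lemma poly_on_add: assumes "poly_on C S f" "poly_on C S g" shows "poly_on C S (\<lambda>x. f x + g x)"
proof -
  from assms obtain p q where "p \<in> polys C" "q \<in> polys C" "\<forall>x\<in>S. f x = p x" "\<forall>x\<in>S. g x = q x"
    unfolding poly_on_def by blast
  then show ?thesis unfolding poly_on_def by (intro bexI[of _ "\<lambda>x. p x + q x"]) (auto intro: polys.add)
qed
lemma poly_on_mult: assumes "poly_on C S f" "poly_on C S g" shows "poly_on C S (\<lambda>x. f x * g x)"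
proof -
  from assms obtain p q where "p \<in> polys C" "q \<in> polys C" "\<forall>x\<in>S. f x = p x" "\<forall>x\<in>S. g x = q x"
    unfolding poly_on_def by blast
  then show ?thesis unfolding poly_on_def by (intro bexI[of _ "\<lambda>x. p x * q x"]) (auto intro: polys.mult)
qed
lemma poly_on_cong: "poly_on C S f \<Longrightarrow> (\<And>x. x \<in> S \<Longrightarrow> f x = g x) \<Longrightarrow> poly_on C S g"
  unfolding poly_on_def by auto
lemma poly_on_subset: "poly_on C S f \<Longrightarrow> T \<subseteq> S \<Longrightarrow> poly_on C T f"
  unfolding poly_on_def by blast

lemma poly_on_sum: "finite I \<Longrightarrow> (\<And>k. k \<in> I \<Longrightarrow> poly_on C S (f k)) \<Longrightarrow> poly_on C S (\<lambda>x. \<Sum>k\<in>I. f k x)"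
proof (induction I rule: finite_induct)
  case empty then show ?case using poly_on_const[of C S 0] by simp
next
  case (insert a I)
  then show ?case using poly_on_add[of C S "f a" "\<lambda>x. \<Sum>k\<in>I. f k x"] by simp
qed

lemma poly_on_prod: "finite I \<Longrightarrow> (\<And>k. k \<in> I \<Longrightarrow> poly_on C S (f k)) \<Longrightarrow> poly_on C S (\<lambda>x. \<Prod>k\<in>I. f k x)"
proof (induction I rule: finite_induct)
  case empty then show ?case using poly_on_const[of C S 1] by simp
next
  case (insert a I)
  then show ?case using poly_on_mult[of C S "f a" "\<lambda>x. \<Prod>k\<in>I. f k x"] by simp
qed

lemma poly_on_comp:
  assumes "\<And>c. c \<in> D \<Longrightarrow> poly_on C S (\<lambda>x. c (h x))" and "p \<in> polys D"
  shows "poly_on C S (\<lambda>x. p (h x))"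
  using assms(2)
proof induction
  case (const c) then show ?case by (rule poly_on_const)
next
  case (coord f) then show ?case using assms(1) by blast
next
  case (add f g) show ?case by (rule poly_on_add[OF add.IH])
next
  case (mult f g) show ?case by (rule poly_on_mult[OF mult.IH])
qed

lemma frac_on_poly: assumes "poly_on C S f" shows "frac_on C S f"
proof -
  from assms obtain p where "p \<in> polys C" "\<forall>x\<in>S. f x = p x" unfolding poly_on_def by blast
  then show ?thesis unfolding frac_on_def
    by (intro bexI[of _ p] bexI[of _ "\<lambda>_. 1"]) (auto intro: polys.const)
qed

lemma frac_on_add: "frac_on C S f \<Longrightarrow> frac_on C S g \<Longrightarrow> frac_on C S (\<lambda>x. f x + g x)"
proof -
  assume "frac_on C S f" "frac_on C S g"
  then obtain p q p' q' where pq: "p \<in> polys C" "q \<in> polys C" "p' \<in> polys C" "q' \<in> polys C"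
    and h: "\<forall>x\<in>S. q x \<noteq> 0 \<and> f x = p x / q x" "\<forall>x\<in>S. q' x \<noteq> 0 \<and> g x = p' x / q' x"
    unfolding frac_on_def by blast
  have "(\<lambda>x. p x * q' x + p' x * q x) \<in> polys C" "(\<lambda>x. q x * q' x) \<in> polys C"
    using pq by (auto intro!: polys.add polys.mult)
  moreover have "\<forall>x\<in>S. q x * q' x \<noteq> 0 \<and> f x + g x = (p x * q' x + p' x * q x) / (q x * q' x)"
    using h by (auto simp: field_simps)
  ultimately show ?thesis unfolding frac_on_def
    by (intro bexI[of _ "\<lambda>x. p x * q' x + p' x * q x"] bexI[of _ "\<lambda>x. q x * q' x"]) auto
qed

lemma frac_on_mult: "frac_on C S f \<Longrightarrow> frac_on C S g \<Longrightarrow> frac_on C S (\<lambda>x. f x * g x)"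
proof -
  assume "frac_on C S f" "frac_on C S g"
  then obtain p q p' q' where pq: "p \<in> polys C" "q \<in> polys C" "p' \<in> polys C" "q' \<in> polys C"
    and h: "\<forall>x\<in>S. q x \<noteq> 0 \<and> f x = p x / q x" "\<forall>x\<in>S. q' x \<noteq> 0 \<and> g x = p' x / q' x"
    unfolding frac_on_def by blast
  have "(\<lambda>x. p x * p' x) \<in> polys C" "(\<lambda>x. q x * q' x) \<in> polys C"
    using pq by (auto intro!: polys.add polys.mult)
  moreover have "\<forall>x\<in>S. q x * q' x \<noteq> 0 \<and> f x * g x = (p x * p' x) / (q x * q' x)"
    using h by (auto simp: field_simps)
  ultimately show ?thesis unfolding frac_on_def
    by (intro bexI[of _ "\<lambda>x. p x * p' x"] bexI[of _ "\<lambda>x. q x * q' x"]) auto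
qed

lemma frac_on_divide: "poly_on C S f \<Longrightarrow> poly_on C S g \<Longrightarrow> (\<And>x. x \<in> S \<Longrightarrow> g x \<noteq> 0) \<Longrightarrow> frac_on C S (\<lambda>x. f x / g x)"
  unfolding poly_on_def frac_on_def by metis

lemma frac_on_cong: "frac_on C S f \<Longrightarrow> (\<And>x. x \<in> S \<Longrightarrow> f x = g x) \<Longrightarrow> frac_on C S g"
  unfolding frac_on_def by auto
lemma frac_on_subset: "frac_on C S f \<Longrightarrow> T \<subseteq> S \<Longrightarrow> frac_on C T f"
  unfolding frac_on_def by blast

lemma frac_on_sum: "finite I \<Longrightarrow> (\<And>k. k \<in> I \<Longrightarrow> frac_on C S (f k)) \<Longrightarrow> frac_on C S (\<lambda>x. \<Sum>k\<in>I. f k x)"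
proof (induction I rule: finite_induct)
  case empty then show ?case using frac_on_poly[OF poly_on_const[of C S 0]] by simp
next
  case (insert a I)
  then show ?case using frac_on_add[of C S "f a" "\<lambda>x. \<Sum>k\<in>I. f k x"] by simp
qed

lemma frac_on_comp:
  assumes "\<And>c. c \<in> D \<Longrightarrow> frac_on C S (\<lambda>x. c (h x))" and "p \<in> polys D"
  shows "frac_on C S (\<lambda>x. p (h x))"
  using assms(2)
proof induction
  case (const c) then show ?case by (rule frac_on_poly[OF poly_on_const])
next
  case (coord f) then show ?case using assms(1) by blast
next
  case (add f g) show ?case by (rule frac_on_add[OF add.IH])
next
  case (mult f g) show ?case by (rule frac_on_mult[OF mult.IH])
qed

lemma frac_on_regular: "frac_on C S f \<Longrightarrow> regular_fun C S f"
  unfolding frac_on_def regular_fun_def by metis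

lemma polys_fix_fst: "p \<in> polys (prod_coords C D) \<Longrightarrow> (\<lambda>y. p (x0, y)) \<in> polys D"
proof (induction rule: polys.induct)
  case (const c) then show ?case by (rule polys.const)
next
  case (coord f)
  then consider (a) g where "g \<in> C" "f = (\<lambda>x. g (fst x))" | (b) g where "g \<in> D" "f = (\<lambda>x. g (snd x))"
    unfolding prod_coords_def by blast
  then show ?case
  proof cases
    case a then show ?thesis by (simp add: polys.const)
  next
    case b then show ?thesis by (simp add: polys.coord)
  qed
next
  case (add f g) show ?case by (rule polys.add[OF add.IH])
next
  case (mult f g) show ?case by (rule polys.mult[OF mult.IH])
qed

lemma poly_on_mult_entry:
  assumes car: "\<And>x. x \<in> S \<Longrightarrow> A x \<in> carrier_mat r m \<and> B x \<in> carrier_mat m c"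
    and pa: "\<And>k. k < m \<Longrightarrow> poly_on C S (\<lambda>x. A x $$ (i,k))"
    and pb: "\<And>k. k < m \<Longrightarrow> poly_on C S (\<lambda>x. B x $$ (k,j))"
    and i: "i < r" and j: "j < c"
  shows "poly_on C S (\<lambda>x. (A x * B x) $$ (i,j))"
proof (rule poly_on_cong)
  show "poly_on C S (\<lambda>x. \<Sum>k\<in>{0..<m}. A x $$ (i,k) * B x $$ (k,j))"
    by (rule poly_on_sum) (auto intro: poly_on_mult pa pb)
  fix x assume "x \<in> S"
  then show "(\<Sum>k\<in>{0..<m}. A x $$ (i,k) * B x $$ (k,j)) = (A x * B x) $$ (i,j)"
    using car[of x] i j by (auto simp: scalar_prod_def)
qed

lemma frac_on_mult_entry:
  assumes car: "\<And>x. x \<in> S \<Longrightarrow> A x \<in> carrier_mat r m \<and> B x \<in> carrier_mat m c"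
    and pa: "\<And>k. k < m \<Longrightarrow> frac_on C S (\<lambda>x. A x $$ (i,k))"
    and pb: "\<And>k. k < m \<Longrightarrow> frac_on C S (\<lambda>x. B x $$ (k,j))"
    and i: "i < r" and j: "j < c"
  shows "frac_on C S (\<lambda>x. (A x * B x) $$ (i,j))"
proof (rule frac_on_cong)
  show "frac_on C S (\<lambda>x. \<Sum>k\<in>{0..<m}. A x $$ (i,k) * B x $$ (k,j))"
    by (rule frac_on_sum) (auto intro: frac_on_mult pa pb)
  fix x assume "x \<in> S"
  then show "(\<Sum>k\<in>{0..<m}. A x $$ (i,k) * B x $$ (k,j)) = (A x * B x) $$ (i,j)"
    using car[of x] i j by (auto simp: scalar_prod_def)
qed

lemma poly_on_det:
  assumes car: "\<And>x. x \<in> S \<Longrightarrow> M x \<in> carrier_mat k k"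
    and pe: "\<And>i j. i < k \<Longrightarrow> j < k \<Longrightarrow> poly_on C S (\<lambda>x. M x $$ (i,j))"
  shows "poly_on C S (\<lambda>x. det (M x))"
proof (rule poly_on_cong)
  show "poly_on C S (\<lambda>x. \<Sum>p\<in>{p. p permutes {0..<k}}. signof p * (\<Prod>i=0..<k. M x $$ (i, p i)))"
  proof (rule poly_on_sum)
    show "finite {p. p permutes {0..<k}}" by (rule finite_permutations) simp
    fix p assume "p \<in> {p. p permutes {0..<k}}"
    then have pk: "\<And>i. i < k \<Longrightarrow> p i < k" using permutes_in_image by fastforce
    show "poly_on C S (\<lambda>x. signof p * (\<Prod>i=0..<k. M x $$ (i, p i)))"
      by (intro poly_on_mult poly_on_const poly_on_prod) (auto intro: pe pk)
  qed
  fix x assume "x \<in> S"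
  then show "(\<Sum>p\<in>{p. p permutes {0..<k}}. signof p * (\<Prod>i=0..<k. M x $$ (i, p i))) = det (M x)"
    using car[of x] by (auto simp: det_def)
qed

lemma frac_on_minv_entry:
  fixes M :: "'p \<Rightarrow> 'a::field mat"
  assumes car: "\<And>x. x \<in> S \<Longrightarrow> M x \<in> carrier_mat k k \<and> invertible_mat (M x)"
    and pe: "\<And>i j. i < k \<Longrightarrow> j < k \<Longrightarrow> poly_on C S (\<lambda>x. M x $$ (i,j))"
    and i: "i < k" and j: "j < k"
  shows "frac_on C S (\<lambda>x. minv (M x) $$ (i,j))"
proof (rule frac_on_cong)
  have pd: "poly_on C S (\<lambda>x. det (M x))" using car pe by (intro poly_on_det) auto
  have pdel: "poly_on C S (\<lambda>x. det (mat_delete (M x) j i))"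
  proof (rule poly_on_det)
    fix x assume "x \<in> S" then show "mat_delete (M x) j i \<in> carrier_mat (k-1) (k-1)"
      using car mat_delete_carrier by blast
  next
    fix a b assume ab: "a < k - 1" "b < k - 1"
    show "poly_on C S (\<lambda>x. mat_delete (M x) j i $$ (a, b))"
      apply (rule poly_on_cong[OF pe[of "if a < j then a else Suc a" "if b < i then b else Suc b"]])
      using ab by (auto simp: mat_delete_def dest!: car)
  qed
  show "frac_on C S (\<lambda>x. ((-1)^(j+i) * det (mat_delete (M x) j i)) / det (M x))"
    using car minv_adj(1) by (intro frac_on_divide poly_on_mult poly_on_const pdel pd) blast+
  fix x assume "x \<in> S"
  then show "(-1)^(j+i) * det (mat_delete (M x) j i) / det (M x) = minv (M x) $$ (i,j)"
    using minv_entry[of "M x" k i j] car i j by auto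
qed

lemma minv_cancel1: "A \<in> carrier_mat k k \<Longrightarrow> invertible_mat (A::'a::field mat) \<Longrightarrow> dim_row Y = k \<Longrightarrow> minv A * (A * Y) = Y"
  using minv_props[of A k] by (simp flip: assoc_dim add: one_left_dim)
lemma minv_cancel2: "A \<in> carrier_mat k k \<Longrightarrow> invertible_mat (A::'a::field mat) \<Longrightarrow> dim_row Y = k \<Longrightarrow> A * (minv A * Y) = Y"
  using minv_props[of A k] by (simp flip: assoc_dim add: one_left_dim)
lemma minv_cancel3: "A \<in> carrier_mat k k \<Longrightarrow> invertible_mat (A::'a::field mat) \<Longrightarrow> dim_col Y = k \<Longrightarrow> Y * A * minv A = Y"
  using minv_props[of A k] by (simp add: assoc_dim one_right_dim)
lemma minv_cancel4: "A \<in> carrier_mat k k \<Longrightarrow> invertible_mat (A::'a::field mat) \<Longrightarrow> dim_col Y = k \<Longrightarrow> Y * minv A * A = Y"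
  using minv_props[of A k] by (simp add: assoc_dim one_right_dim)

lemma sink_calc:
  fixes hw hz hm d g :: "'a::field mat"
  assumes hw: "hw \<in> carrier_mat k k" "invertible_mat hw"
    and hz: "hz \<in> carrier_mat k k" "invertible_mat hz"
    and hm: "hm \<in> carrier_mat m m" "invertible_mat hm"
    and d: "d \<in> carrier_mat k k" "invertible_mat d" and g: "g \<in> carrier_mat k m"
  shows "minv (hw * d * minv hz) * (hw * g * minv hm) = hz * (minv d * g) * minv hm"
proof -
  note a = minv_props[OF hw] minv_props[OF hz] minv_props[OF hm] minv_props[OF d]
  have i1: "invertible_mat (hw * d)" and e1: "minv (hw * d) = minv d * minv hw" using minv_mult[OF hw d] by auto
  have "minv (hw * d * minv hz) = minv (minv hz) * minv (hw * d)"
    using minv_mult(2)[OF _ i1 a(4) minv_minv(1)[OF hz]] hw d by simp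
  also have "\<dots> = hz * (minv d * minv hw)" using minv_minv(2)[OF hz] e1 by simp
  finally have "minv (hw * d * minv hz) * (hw * g * minv hm) = hz * (minv d * minv hw) * (hw * g * minv hm)" by simp
  also have "\<dots> = hz * (minv d * (minv hw * (hw * (g * minv hm))))"
    using hw hz hm d g a by (simp add: assoc_dim)
  also have "\<dots> = hz * (minv d * (g * minv hm))"
    using minv_cancel1[OF hw, of "g * minv hm"] g by simp
  also have "\<dots> = hz * (minv d * g) * minv hm"
    using hw hz hm d g a by (simp add: assoc_dim)
  finally show ?thesis .
qed

lemma source_calc:
  fixes hw hz hm d g :: "'a::field mat"
  assumes hw: "hw \<in> carrier_mat k k" "invertible_mat hw"
    and hz: "hz \<in> carrier_mat k k" "invertible_mat hz"
    and hm: "hm \<in> carrier_mat m m" "invertible_mat hm"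
    and d: "d \<in> carrier_mat k k" "invertible_mat d" and g: "g \<in> carrier_mat m k"
  shows "(hm * g * minv hw) * minv (hz * d * minv hw) = hm * (g * minv d) * minv hz"
proof -
  note a = minv_props[OF hw] minv_props[OF hz] minv_props[OF hm] minv_props[OF d]
  have i1: "invertible_mat (hz * d)" and e1: "minv (hz * d) = minv d * minv hz" using minv_mult[OF hz d] by auto
  have "minv (hz * d * minv hw) = minv (minv hw) * minv (hz * d)"
    using minv_mult(2)[OF _ i1 a(1) minv_minv(1)[OF hw]] hz d by simp
  also have "\<dots> = hw * (minv d * minv hz)" using minv_minv(2)[OF hw] e1 by simp
  finally have "(hm * g * minv hw) * minv (hz * d * minv hw) = (hm * g * minv hw) * (hw * (minv d * minv hz))" by simp
  also have "\<dots> = hm * (g * (minv hw * (hw * (minv d * minv hz))))"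
    using hw hz hm d g a by (simp add: assoc_dim)
  also have "\<dots> = hm * (g * (minv d * minv hz))"
    using minv_cancel1[OF hw, of "minv d * minv hz"] a by simp
  also have "\<dots> = hm * (g * minv d) * minv hz"
    using hw hz hm d g a by (simp add: assoc_dim)
  finally show ?thesis .
qed

locale qs =
  fixes n :: nat and fw :: "nat \<Rightarrow> bool" and d :: "nat \<Rightarrow> nat"
begin

abbreviation "Q \<equiv> typeA n fw"
abbreviation "Qt \<equiv> tildeQ n fw"
abbreviation "dt \<equiv> tilde_dim d"
abbreviation "W \<equiv> Wset n fw"
abbreviation "SK \<equiv> sinkW n fw"
abbreviation "SO \<equiv> sourceW n fw"

lemma SK_D: "i \<in> SK \<Longrightarrow> 1 \<le> i \<and> i \<le> n \<and> fw i \<and> i \<in> W \<and> i \<notin> SO"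
  unfolding sinkW_def sourceW_def Wset_def by auto
lemma SO_D: "i \<in> SO \<Longrightarrow> 1 \<le> i \<and> i \<le> n \<and> \<not> fw i \<and> i \<in> W \<and> i \<notin> SK"
  unfolding sinkW_def sourceW_def Wset_def by auto
lemma W_D: "i \<in> W \<longleftrightarrow> i \<in> SK \<or> i \<in> SO"
  unfolding Wset_def by auto

lemma Qt_simps:
  "qverts Qt = Inl ` {0..n} \<union> Inr ` W" "qarrs Qt = Inl ` {1..n} \<union> Inr ` W"
  "qverts Q = {0..n}" "qarrs Q = {1..n}"
  "qsrc Q i = (if fw i then i - 1 else i)" "qtgt Q i = (if fw i then i else i - 1)"
  "dt (Inl i) = d i" "dt (Inr i) = d i"
  unfolding tildeQ_def typeA_def tilde_dim_def by auto

lemma Qt_sink: "i \<in> SK \<Longrightarrow> qsrc Qt (Inl i) = Inl (i - 1) \<and> qtgt Qt (Inl i) = Inr i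
   \<and> qsrc Qt (Inr i) = Inl i \<and> qtgt Qt (Inr i) = Inr i"
  unfolding tildeQ_def by auto
lemma Qt_source: "i \<in> SO \<Longrightarrow> qsrc Qt (Inl i) = Inr i \<and> qtgt Qt (Inl i) = Inl (i - 1)
   \<and> qsrc Qt (Inr i) = Inr i \<and> qtgt Qt (Inr i) = Inl i"
  using SO_D[of i] unfolding tildeQ_def by auto
lemma Qt_other: "i \<notin> W \<Longrightarrow> qsrc Qt (Inl i) = Inl (qsrc Q i) \<and> qtgt Qt (Inl i) = Inl (qtgt Q i)"
  using W_D[of i] unfolding tildeQ_def by auto

lemma Q_bounds: "i \<in> {1..n} \<Longrightarrow> qsrc Q i \<le> n \<and> qtgt Q i \<le> n"
  by (auto simp: Qt_simps)

definition U :: "(nat + nat \<Rightarrow> 'a::field mat) set" where "U = Uset n fw d"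
definition R :: "(nat \<Rightarrow> 'a::field mat) set" where "R = rep_space Q d"
definition G :: "(nat \<Rightarrow> 'a::field mat) set" where "G = Gstar n fw d"

lemma U_arr: "V \<in> U \<Longrightarrow> a \<in> qarrs Qt \<Longrightarrow> V a \<in> carrier_mat (dt (qtgt Qt a)) (dt (qsrc Qt a))"
  unfolding U_def Uset_def rep_space_def by auto
lemma U_inv: "V \<in> U \<Longrightarrow> i \<in> W \<Longrightarrow> invertible_mat (V (Inr i))"
  unfolding U_def Uset_def by auto
lemma U_sink: "V \<in> U \<Longrightarrow> i \<in> SK \<Longrightarrow> V (Inl i) \<in> carrier_mat (d i) (d (i - 1))
   \<and> V (Inr i) \<in> carrier_mat (d i) (d i) \<and> invertible_mat (V (Inr i))"
  using SK_D[of i] Qt_sink[of i] U_arr[of V "Inl i"] U_arr[of V "Inr i"] U_inv[of V i] by (auto simp: Qt_simps)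
lemma U_source: "V \<in> U \<Longrightarrow> i \<in> SO \<Longrightarrow> V (Inl i) \<in> carrier_mat (d (i - 1)) (d i)
   \<and> V (Inr i) \<in> carrier_mat (d i) (d i) \<and> invertible_mat (V (Inr i))"
  using SO_D[of i] Qt_source[of i] U_arr[of V "Inl i"] U_arr[of V "Inr i"] U_inv[of V i] by (auto simp: Qt_simps)
lemma U_other: "V \<in> U \<Longrightarrow> i \<in> {1..n} \<Longrightarrow> i \<notin> W \<Longrightarrow> V (Inl i) \<in> carrier_mat (d (qtgt Q i)) (d (qsrc Q i))"
  using Qt_other[of i] U_arr[of V "Inl i"] by (auto simp: Qt_simps)
lemma U_out: "V \<in> U \<Longrightarrow> a \<notin> qarrs Qt \<Longrightarrow> V a = 0\<^sub>m 0 0"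
  unfolding U_def Uset_def rep_space_def by auto

lemma R_in: "X \<in> R \<Longrightarrow> i \<in> {1..n} \<Longrightarrow> X i \<in> carrier_mat (d (qtgt Q i)) (d (qsrc Q i))"
  unfolding R_def rep_space_def by (auto simp: Qt_simps)
lemma R_out: "X \<in> R \<Longrightarrow> i \<notin> {1..n} \<Longrightarrow> X i = 0\<^sub>m 0 0"
  unfolding R_def rep_space_def by (auto simp: Qt_simps)
lemma R_I: "(\<And>i. i \<in> {1..n} \<Longrightarrow> X i \<in> carrier_mat (d (qtgt Q i)) (d (qsrc Q i))) \<Longrightarrow>
   (\<And>i. i \<notin> {1..n} \<Longrightarrow> X i = 0\<^sub>m 0 0) \<Longrightarrow> X \<in> R"
  unfolding R_def rep_space_def by (auto simp: Qt_simps)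

lemma G_in: "g \<in> G \<Longrightarrow> i \<in> W \<Longrightarrow> g i \<in> carrier_mat (d i) (d i) \<and> invertible_mat (g i)"
  unfolding G_def Gstar_def by auto
lemma G_out: "g \<in> G \<Longrightarrow> i \<notin> W \<Longrightarrow> g i = 1\<^sub>m 0"
  unfolding G_def Gstar_def by auto

lemma GLt_v: "h \<in> GL Qt dt \<Longrightarrow> v \<in> qverts Qt \<Longrightarrow> h v \<in> carrier_mat (dt v) (dt v) \<and> invertible_mat (h v)"
  unfolding GL_def by auto
lemma GLt_Inl: "h \<in> GL Qt dt \<Longrightarrow> i \<le> n \<Longrightarrow> h (Inl i) \<in> carrier_mat (d i) (d i) \<and> invertible_mat (h (Inl i))"
  using GLt_v[of h "Inl i"] by (auto simp: Qt_simps)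
lemma GLt_Inr: "h \<in> GL Qt dt \<Longrightarrow> i \<in> W \<Longrightarrow> h (Inr i) \<in> carrier_mat (d i) (d i) \<and> invertible_mat (h (Inr i))"
  using GLt_v[of h "Inr i"] by (auto simp: Qt_simps)
lemma GL_in: "k \<in> GL Q d \<Longrightarrow> i \<le> n \<Longrightarrow> k i \<in> carrier_mat (d i) (d i) \<and> invertible_mat (k i)"
  unfolding GL_def by (auto simp: Qt_simps)

end

lemma comp_calc:
  fixes A1 A2 B1 B2 Y :: "'a::field mat"
  assumes "A1 \<in> carrier_mat p p" "A2 \<in> carrier_mat p p" "B1 \<in> carrier_mat q q" "invertible_mat B1"
    "B2 \<in> carrier_mat q q" "invertible_mat B2" "Y \<in> carrier_mat p q"
  shows "A2 * (A1 * Y * minv B1) * minv B2 = (A2 * A1) * Y * minv (B2 * B1)"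
  using assms minv_mult(2)[of B2 q B1] minv_props[of B1 q] minv_props[of B2 q] by (simp add: assoc_dim)

lemma invertible_act_mat:
  fixes A B Y :: "'a::field mat"
  assumes "A \<in> carrier_mat k k" "invertible_mat A" "B \<in> carrier_mat k k" "invertible_mat B"
    "Y \<in> carrier_mat k k" "invertible_mat Y"
  shows "invertible_mat (A * Y * minv B)"
  using assms minv_mult(1)[of A k Y] minv_mult(1)[of "A * Y" k "minv B"] minv_minv(1)[of B k] minv_props(1)[of B k]
  by auto

context qs begin

lemma arr_verts: "a \<in> qarrs Qt \<Longrightarrow> qsrc Qt a \<in> qverts Qt \<and> qtgt Qt a \<in> qverts Qt"
proof -
  assume a: "a \<in> qarrs Qt"
  then consider (l) i where "a = Inl i" "i \<in> {1..n}" | (r) i where "a = Inr i" "i \<in> W"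
    by (auto simp: Qt_simps)
  then show ?thesis
  proof cases
    case l
    then consider "i \<in> SK" | "i \<in> SO" | "i \<notin> W" using W_D by blast
    then show ?thesis using l Qt_sink[of i] Qt_source[of i] Qt_other[of i] SK_D[of i] SO_D[of i] Q_bounds[of i]
      by cases (auto simp: Qt_simps)
  next
    case r
    then consider "i \<in> SK" | "i \<in> SO" using W_D by blast
    then show ?thesis using r Qt_sink[of i] Qt_source[of i] SK_D[of i] SO_D[of i]
      by cases (auto simp: Qt_simps)
  qed
qed

lemma U_I:
  assumes "\<And>i. i \<in> SK \<Longrightarrow> V (Inl i) \<in> carrier_mat (d i) (d (i - 1)) \<and> V (Inr i) \<in> carrier_mat (d i) (d i) \<and> invertible_mat (V (Inr i))"
    and "\<And>i. i \<in> SO \<Longrightarrow> V (Inl i) \<in> carrier_mat (d (i - 1)) (d i) \<and> V (Inr i) \<in> carrier_mat (d i) (d i) \<and> invertible_mat (V (Inr i))"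
    and "\<And>i. i \<in> {1..n} \<Longrightarrow> i \<notin> W \<Longrightarrow> V (Inl i) \<in> carrier_mat (d (qtgt Q i)) (d (qsrc Q i))"
    and "\<And>i. i \<notin> {1..n} \<Longrightarrow> V (Inl i) = 0\<^sub>m 0 0"
    and "\<And>i. i \<notin> W \<Longrightarrow> V (Inr i) = 0\<^sub>m 0 0"
  shows "V \<in> U"
  unfolding U_def Uset_def rep_space_def
proof (intro CollectI conjI ballI allI impI)
  fix a assume a: "a \<in> qarrs Qt"
  then consider (l) i where "a = Inl i" "i \<in> {1..n}" | (r) i where "a = Inr i" "i \<in> W"
    by (auto simp: Qt_simps)
  then show "V a \<in> carrier_mat (dt (qtgt Qt a)) (dt (qsrc Qt a))"
  proof cases
    case l
    then consider "i \<in> SK" | "i \<in> SO" | "i \<notin> W" using W_D by blast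
    then show ?thesis using l assms(1-3)[of i] Qt_sink[of i] Qt_source[of i] Qt_other[of i]
      by cases (auto simp: Qt_simps)
  next
    case r
    then consider "i \<in> SK" | "i \<in> SO" using W_D by blast
    then show ?thesis using r assms(1,2)[of i] Qt_sink[of i] Qt_source[of i]
      by cases (auto simp: Qt_simps)
  qed
next
  fix a assume "a \<notin> qarrs Qt"
  then show "V a = 0\<^sub>m 0 0" using assms(4,5) by (cases a) (auto simp: Qt_simps simp del: atLeastAtMost_iff)
next
  fix i assume "i \<in> W"
  then show "invertible_mat (V (Inr i))" using assms(1,2)[of i] W_D[of i] by auto
qed

lemma U_ext:
  assumes "V \<in> U" "V' \<in> U" "\<And>i. i \<in> {1..n} \<Longrightarrow> V (Inl i) = V' (Inl i)" "\<And>i. i \<in> W \<Longrightarrow> V (Inr i) = V' (Inr i)"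
  shows "V = V'"
proof
  fix a show "V a = V' a"
  proof (cases "a \<in> qarrs Qt")
    case True then show ?thesis using assms by (auto simp: Qt_simps)
  next
    case False then show ?thesis using U_out[OF assms(1)] U_out[OF assms(2)] by simp
  qed
qed

lemma R_ext:
  assumes "X \<in> R" "X' \<in> R" "\<And>i. i \<in> {1..n} \<Longrightarrow> X i = X' i"
  shows "X = X'"
proof
  fix i show "X i = X' i"
    using assms R_out[OF assms(1), of i] R_out[OF assms(2), of i] by (cases "i \<in> {1..n}") auto
qed

definition gpart :: "(nat + nat \<Rightarrow> 'a::field mat) \<Rightarrow> nat \<Rightarrow> 'a mat" where
  "gpart V = (\<lambda>i. if i \<in> W then V (Inr i) else 1\<^sub>m 0)"

definition sec :: "(nat \<Rightarrow> 'a::field mat) \<Rightarrow> (nat \<Rightarrow> 'a mat) \<Rightarrow> nat + nat \<Rightarrow> 'a mat" where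
  "sec g X = (\<lambda>a. case a of
      Inl i \<Rightarrow> (if i \<in> {1..n} then (if i \<in> SK then g i * X i else if i \<in> SO then X i * g i else X i) else 0\<^sub>m 0 0)
    | Inr i \<Rightarrow> (if i \<in> W then g i else 0\<^sub>m 0 0))"

definition res :: "(nat + nat \<Rightarrow> 'a::field mat) \<Rightarrow> nat \<Rightarrow> 'a mat" where
  "res h = (\<lambda>i. if i \<le> n then h (Inl i) else 1\<^sub>m 0)"

definition ext :: "(nat \<Rightarrow> 'a::field mat) \<Rightarrow> nat + nat \<Rightarrow> 'a mat" where
  "ext k = (\<lambda>v. case v of Inl i \<Rightarrow> k i | Inr i \<Rightarrow> (if i \<in> W then 1\<^sub>m (d i) else 1\<^sub>m 0))"

abbreviation "pii \<equiv> piQ n fw"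

lemma pi_R: assumes V: "V \<in> U" shows "pii V \<in> R"
proof (rule R_I)
  fix i assume i: "i \<in> {1..n}"
  consider (sk) "i \<in> SK" | (so) "i \<in> SO" | (ot) "i \<notin> W" using W_D by blast
  then show "pii V i \<in> carrier_mat (d (qtgt Q i)) (d (qsrc Q i))"
  proof cases
    case sk then show ?thesis using U_sink[OF V sk] minv_props[of "V (Inr i)" "d i"] SK_D[OF sk] i
      by (auto simp: piQ_def Qt_simps intro!: mult_carrier_mat)
  next
    case so then show ?thesis using U_source[OF V so] minv_props[of "V (Inr i)" "d i"] SO_D[OF so] i
      by (auto simp: piQ_def Qt_simps intro!: mult_carrier_mat)
  next
    case ot then show ?thesis using U_other[OF V i ot] W_D[of i] i by (auto simp: piQ_def)
  qed
next
  fix i assume "i \<notin> {1..n}" then show "pii V i = 0\<^sub>m 0 0" by (simp add: piQ_def del: atLeastAtMost_iff)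
qed

lemma gpart_G: "V \<in> U \<Longrightarrow> gpart V \<in> G"
  using U_sink U_source W_D unfolding G_def Gstar_def gpart_def by fastforce

lemma sec_U: assumes g: "g \<in> G" and X: "X \<in> R" shows "sec g X \<in> U"
proof (rule U_I)
  fix i assume sk: "i \<in> SK"
  then show "sec g X (Inl i) \<in> carrier_mat (d i) (d (i - 1)) \<and> sec g X (Inr i) \<in> carrier_mat (d i) (d i) \<and> invertible_mat (sec g X (Inr i))"
    using SK_D[OF sk] G_in[OF g, of i] R_in[OF X, of i] by (auto simp: sec_def Qt_simps intro!: mult_carrier_mat)
next
  fix i assume so: "i \<in> SO"
  then show "sec g X (Inl i) \<in> carrier_mat (d (i - 1)) (d i) \<and> sec g X (Inr i) \<in> carrier_mat (d i) (d i) \<and> invertible_mat (sec g X (Inr i))"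
    using SO_D[OF so] G_in[OF g, of i] R_in[OF X, of i] by (auto simp: sec_def Qt_simps intro!: mult_carrier_mat)
next
  fix i assume "i \<in> {1..n}" "i \<notin> W"
  then show "sec g X (Inl i) \<in> carrier_mat (d (qtgt Q i)) (d (qsrc Q i))"
    using R_in[OF X, of i] W_D[of i] by (auto simp: sec_def)
qed (auto simp: sec_def)

lemma pi_sec: assumes g: "g \<in> G" and X: "X \<in> R" shows "pii (sec g X) = X"
proof (rule R_ext[OF pi_R[OF sec_U[OF g X]] X])
  fix i assume i: "i \<in> {1..n}"
  consider (sk) "i \<in> SK" | (so) "i \<in> SO" | (ot) "i \<notin> W" using W_D by blast
  then show "pii (sec g X) i = X i"
  proof cases
    case sk then show ?thesis using SK_D[OF sk] G_in[OF g, of i] R_in[OF X i] i minv_cancel1[of "g i" "d i" "X i"]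
      by (auto simp: piQ_def sec_def Qt_simps)
  next
    case so then show ?thesis using SO_D[OF so] G_in[OF g, of i] R_in[OF X i] i minv_cancel3[of "g i" "d i" "X i"]
      by (auto simp: piQ_def sec_def Qt_simps)
  next
    case ot then show ?thesis using i W_D[of i] by (auto simp: piQ_def sec_def)
  qed
qed

lemma gpart_sec: assumes g: "g \<in> G" shows "gpart (sec g X) = g"
  using G_out[OF g] unfolding gpart_def sec_def by auto

lemma sec_gpart: assumes V: "V \<in> U" shows "sec (gpart V) (pii V) = V"
proof (rule U_ext[OF sec_U[OF gpart_G[OF V] pi_R[OF V]] V])
  fix i assume i: "i \<in> {1..n}"
  consider (sk) "i \<in> SK" | (so) "i \<in> SO" | (ot) "i \<notin> W" using W_D by blast
  then show "sec (gpart V) (pii V) (Inl i) = V (Inl i)"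
  proof cases
    case sk then show ?thesis using SK_D[OF sk] U_sink[OF V sk] i minv_cancel2[of "V (Inr i)" "d i" "V (Inl i)"]
      by (auto simp: piQ_def sec_def gpart_def)
  next
    case so then show ?thesis using SO_D[OF so] U_source[OF V so] i minv_cancel4[of "V (Inr i)" "d i" "V (Inl i)"]
      by (auto simp: piQ_def sec_def gpart_def)
  next
    case ot then show ?thesis using i W_D[of i] by (auto simp: piQ_def sec_def)
  qed
qed (auto simp: sec_def gpart_def)

end

context qs begin

lemma Inr_dims: "i \<in> W \<Longrightarrow> dt (qtgt Qt (Inr i)) = d i \<and> dt (qsrc Qt (Inr i)) = d i"
  using W_D[of i] Qt_sink[of i] Qt_source[of i] by (auto simp: Qt_simps)

lemma U_I':
  assumes "\<And>a. a \<in> qarrs Qt \<Longrightarrow> V a \<in> carrier_mat (dt (qtgt Qt a)) (dt (qsrc Qt a))"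
    "\<And>a. a \<notin> qarrs Qt \<Longrightarrow> V a = 0\<^sub>m 0 0" "\<And>i. i \<in> W \<Longrightarrow> invertible_mat (V (Inr i))"
  shows "V \<in> U"
  unfolding U_def Uset_def rep_space_def using assms by auto

lemma act_U: assumes V: "V \<in> U" and h: "h \<in> GL Qt dt" shows "act Qt h V \<in> U"
proof (rule U_I')
  fix a assume a: "a \<in> qarrs Qt"
  note vs = arr_verts[OF a]
  show "act Qt h V a \<in> carrier_mat (dt (qtgt Qt a)) (dt (qsrc Qt a))"
    using a GLt_v[OF h vs[THEN conjunct1]] GLt_v[OF h vs[THEN conjunct2]] U_arr[OF V a]
      minv_props(1)[of "h (qsrc Qt a)" "dt (qsrc Qt a)"]
    by (auto simp: act_def intro!: mult_carrier_mat)
next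
  fix a assume "a \<notin> qarrs Qt" then show "act Qt h V a = 0\<^sub>m 0 0" using U_out[OF V] by (simp add: act_def)
next
  fix i assume i: "i \<in> W"
  have a: "Inr i \<in> qarrs Qt" using i by (simp add: Qt_simps)
  note vs = arr_verts[OF a]
  show "invertible_mat (act Qt h V (Inr i))"
    using a GLt_v[OF h vs[THEN conjunct1]] GLt_v[OF h vs[THEN conjunct2]] U_arr[OF V a] U_inv[OF V i] Inr_dims[OF i]
    by (auto simp: act_def intro!: invertible_act_mat[where k="d i"])
qed

lemma act_R: assumes X: "X \<in> R" and k: "k \<in> GL Q d" shows "act Q k X \<in> R"
proof (rule R_I)
  fix i assume i: "i \<in> {1..n}"
  then show "act Q k X i \<in> carrier_mat (d (qtgt Q i)) (d (qsrc Q i))"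
    using R_in[OF X i] GL_in[OF k, of "qtgt Q i"] GL_in[OF k, of "qsrc Q i"] Q_bounds[OF i]
      minv_props(1)[of "k (qsrc Q i)" "d (qsrc Q i)"]
    by (auto simp: act_def Qt_simps intro!: mult_carrier_mat)
next
  fix i assume "i \<notin> {1..n}" then show "act Q k X i = 0\<^sub>m 0 0"
    using R_out[OF X] by (simp add: act_def Qt_simps del: atLeastAtMost_iff)
qed

lemma res_GL: "h \<in> GL Qt dt \<Longrightarrow> res h \<in> GL Q d"
  using GLt_Inl[of h] unfolding GL_def res_def by (auto simp: Qt_simps)

lemma ext_GL: assumes k: "k \<in> GL Q d" shows "ext k \<in> GL Qt dt"
proof -
  have "\<forall>v \<in> qverts Qt. ext k v \<in> carrier_mat (dt v) (dt v) \<and> invertible_mat (ext k v)"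
    using GL_in[OF k] one_invertible by (auto simp: Qt_simps ext_def)
  moreover have "\<forall>v. v \<notin> qverts Qt \<longrightarrow> ext k v = 1\<^sub>m 0"
  proof (intro allI impI)
    fix v assume "v \<notin> qverts Qt"
    then show "ext k v = 1\<^sub>m 0" using k unfolding GL_def by (cases v) (auto simp: Qt_simps ext_def image_iff)
  qed
  ultimately show ?thesis unfolding GL_def by blast
qed

lemma res_ext: "k \<in> GL Q d \<Longrightarrow> res (ext k) = k"
  unfolding res_def ext_def GL_def by (auto simp: Qt_simps)

lemma pi_act: assumes V: "V \<in> U" and h: "h \<in> GL Qt dt"
  shows "pii (act Qt h V) = act Q (res h) (pii V)"
proof (rule R_ext[OF pi_R[OF act_U[OF V h]] act_R[OF pi_R[OF V] res_GL[OF h]]])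
  fix i assume i: "i \<in> {1..n}"
  consider (sk) "i \<in> SK" | (so) "i \<in> SO" | (ot) "i \<notin> W" using W_D by blast
  then show "pii (act Qt h V) i = act Q (res h) (pii V) i"
  proof cases
    case sk
    have im: "i - 1 \<le> n" using i by auto
    note s = SK_D[OF sk] Qt_sink[OF sk] sk im
    have "pii (act Qt h V) i = minv (h (Inr i) * V (Inr i) * minv (h (Inl i))) * (h (Inr i) * V (Inl i) * minv (h (Inl (i - 1))))"
      using s i by (simp add: piQ_def act_def Qt_simps)
    also have "\<dots> = h (Inl i) * (minv (V (Inr i)) * V (Inl i)) * minv (h (Inl (i - 1)))"
      by (rule sink_calc) (use GLt_Inr[OF h, of i] GLt_Inl[OF h, of i] GLt_Inl[OF h, of "i - 1"] U_sink[OF V sk] s in auto)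
    also have "\<dots> = act Q (res h) (pii V) i"
      using s i by (simp add: piQ_def act_def Qt_simps res_def)
    finally show ?thesis .
  next
    case so
    have im: "i - 1 \<le> n" using i by auto
    note s = SO_D[OF so] Qt_source[OF so] so im
    have "pii (act Qt h V) i = (h (Inl (i - 1)) * V (Inl i) * minv (h (Inr i))) * minv (h (Inl i) * V (Inr i) * minv (h (Inr i)))"
      using s i by (simp add: piQ_def act_def Qt_simps)
    also have "\<dots> = h (Inl (i - 1)) * (V (Inl i) * minv (V (Inr i))) * minv (h (Inl i))"
      by (rule source_calc) (use GLt_Inr[OF h, of i] GLt_Inl[OF h, of i] GLt_Inl[OF h, of "i - 1"] U_source[OF V so] s in auto)
    also have "\<dots> = act Q (res h) (pii V) i"
      using s i by (simp add: piQ_def act_def Qt_simps res_def)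
    finally show ?thesis .
  next
    case ot
    then show ?thesis using i Q_bounds[OF i] Qt_other[OF ot] W_D[of i]
      by (simp add: piQ_def act_def Qt_simps res_def)
  qed
qed

lemma GL_mult: assumes "h1 \<in> GL Qt dt" "h2 \<in> GL Qt dt" shows "(\<lambda>v. h2 v * h1 v) \<in> GL Qt dt"
proof -
  have "\<forall>v \<in> qverts Qt. h2 v * h1 v \<in> carrier_mat (dt v) (dt v) \<and> invertible_mat (h2 v * h1 v)"
  proof
    fix v assume v: "v \<in> qverts Qt"
    show "h2 v * h1 v \<in> carrier_mat (dt v) (dt v) \<and> invertible_mat (h2 v * h1 v)"
      using GLt_v[OF assms(1) v] GLt_v[OF assms(2) v] minv_mult(1)[of "h2 v" "dt v" "h1 v"] by auto
  qed
  moreover have "\<forall>v. v \<notin> qverts Qt \<longrightarrow> h2 v * h1 v = 1\<^sub>m 0" using assms unfolding GL_def by auto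
  ultimately show ?thesis unfolding GL_def by blast
qed

lemma act_comp: assumes V: "V \<in> U" and h: "h1 \<in> GL Qt dt" "h2 \<in> GL Qt dt"
  shows "act Qt h2 (act Qt h1 V) = act Qt (\<lambda>v. h2 v * h1 v) V"
proof
  fix a show "act Qt h2 (act Qt h1 V) a = act Qt (\<lambda>v. h2 v * h1 v) V a"
  proof (cases "a \<in> qarrs Qt")
    case a: True
    note vs = arr_verts[OF a]
    have "h2 (qtgt Qt a) * (h1 (qtgt Qt a) * V a * minv (h1 (qsrc Qt a))) * minv (h2 (qsrc Qt a))
      = (h2 (qtgt Qt a) * h1 (qtgt Qt a)) * V a * minv (h2 (qsrc Qt a) * h1 (qsrc Qt a))"
      by (rule comp_calc) (use GLt_v[OF h(1) vs[THEN conjunct2]] GLt_v[OF h(2) vs[THEN conjunct2]]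
        GLt_v[OF h(1) vs[THEN conjunct1]]  GLt_v[OF h(2) vs[THEN conjunct1]] U_arr[OF V a] in auto)
    then show ?thesis using a by (simp add: act_def)
  qed (simp add: act_def)
qed

end

lemma fib_sink_calc:
  fixes e e' g g' :: "'a::field mat"
  assumes e: "e \<in> carrier_mat k k" "invertible_mat e" and e': "e' \<in> carrier_mat k k" "invertible_mat e'"
    and g: "g \<in> carrier_mat k m" and g': "g' \<in> carrier_mat k m" and eq: "minv e * g = minv e' * g'"
  shows "(e' * minv e) * g * minv (1\<^sub>m m) = g'"
proof -
  note a = minv_props[OF e] minv_props[OF e']
  have "(e' * minv e) * g * minv (1\<^sub>m m) = e' * (minv e * g)"
    using a e e' g by (simp add: one_invertible assoc_dim one_right_dim)
  also have "\<dots> = g'" using eq minv_cancel2[OF e', of g'] g' by simp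
  finally show "(e' * minv e) * g * minv (1\<^sub>m m) = g'" .
qed

lemma fib_sink_calc2:
  fixes e e' :: "'a::field mat"
  assumes e: "e \<in> carrier_mat k k" "invertible_mat e" and e': "e' \<in> carrier_mat k k" "invertible_mat e'"
  shows "(e' * minv e) * e * minv (1\<^sub>m k) = e'"
  using minv_props[OF e] minv_props[OF e'] e e' by (simp add: one_invertible assoc_dim one_right_dim)

lemma fib_source_calc:
  fixes e e' g g' :: "'a::field mat"
  assumes e: "e \<in> carrier_mat k k" "invertible_mat e" and e': "e' \<in> carrier_mat k k" "invertible_mat e'"
    and g: "g \<in> carrier_mat m k" and g': "g' \<in> carrier_mat m k" and eq: "g * minv e = g' * minv e'"
  shows "1\<^sub>m m * g * minv (minv e' * e) = g'"
proof -
  note a = minv_props[OF e] minv_props[OF e']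
  have mm: "minv (minv e' * e) = minv e * e'"
    using minv_mult(2)[of "minv e'" k e] minv_minv[OF e'] a e by simp
  have "1\<^sub>m m * g * minv (minv e' * e) = (g * minv e) * e'"
    using mm a e e' g by (simp add: assoc_dim one_left_dim)
  also have "\<dots> = g'" using eq minv_cancel4[OF e', of g'] g' by simp
  finally show "1\<^sub>m m * g * minv (minv e' * e) = g'" .
qed

lemma fib_source_calc2:
  fixes e e' :: "'a::field mat"
  assumes e: "e \<in> carrier_mat k k" "invertible_mat e" and e': "e' \<in> carrier_mat k k" "invertible_mat e'"
  shows "1\<^sub>m k * e * minv (minv e' * e) = e'"
proof -
  note a = minv_props[OF e] minv_props[OF e']
  have mm: "minv (minv e' * e) = minv e * e'"
    using minv_mult(2)[of "minv e'" k e] minv_minv[OF e'] a e by simp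
  show ?thesis using mm a e e' by (simp add: assoc_dim one_left_dim minv_cancel2)
qed

context qs begin

definition fibh :: "(nat + nat \<Rightarrow> 'a::field mat) \<Rightarrow> (nat + nat \<Rightarrow> 'a mat) \<Rightarrow> nat + nat \<Rightarrow> 'a mat" where
  "fibh V V' = (\<lambda>v. case v of Inl i \<Rightarrow> (if i \<le> n then 1\<^sub>m (d i) else 1\<^sub>m 0)
      | Inr i \<Rightarrow> (if i \<in> SK then V' (Inr i) * minv (V (Inr i)) else if i \<in> SO then minv (V' (Inr i)) * V (Inr i) else 1\<^sub>m 0))"

lemma fibh_GL: assumes V: "V \<in> U" and V': "V' \<in> U" shows "fibh V V' \<in> GL Qt dt"
proof -
  have "\<forall>v \<in> qverts Qt. fibh V V' v \<in> carrier_mat (dt v) (dt v) \<and> invertible_mat (fibh V V' v)"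
  proof
    fix v assume v: "v \<in> qverts Qt"
    then consider (l) i where "v = Inl i" "i \<le> n" | (sk) i where "v = Inr i" "i \<in> SK" | (so) i where "v = Inr i" "i \<in> SO"
      using W_D by (auto simp: Qt_simps)
    then show "fibh V V' v \<in> carrier_mat (dt v) (dt v) \<and> invertible_mat (fibh V V' v)"
    proof cases
      case l then show ?thesis using one_invertible by (simp add: fibh_def Qt_simps)
    next
      case sk
      have A: "V' (Inr i) \<in> carrier_mat (d i) (d i)" "invertible_mat (V' (Inr i))"
        "V (Inr i) \<in> carrier_mat (d i) (d i)" "invertible_mat (V (Inr i))"
        using U_sink[OF V sk(2)] U_sink[OF V' sk(2)] by auto
      note B = minv_props(1)[OF A(3,4)] minv_minv(1)[OF A(3,4)]
      have "V' (Inr i) * minv (V (Inr i)) \<in> carrier_mat (d i) (d i) \<and> invertible_mat (V' (Inr i) * minv (V (Inr i)))"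
        using mult_carrier_mat[OF A(1) B(1)] minv_mult(1)[OF A(1,2) B] by blast
      then show ?thesis using sk by (simp add: fibh_def Qt_simps)
    next
      case so
      have A: "V' (Inr i) \<in> carrier_mat (d i) (d i)" "invertible_mat (V' (Inr i))"
        "V (Inr i) \<in> carrier_mat (d i) (d i)" "invertible_mat (V (Inr i))"
        using U_source[OF V so(2)] U_source[OF V' so(2)] by auto
      note B = minv_props(1)[OF A(1,2)] minv_minv(1)[OF A(1,2)]
      have "minv (V' (Inr i)) * V (Inr i) \<in> carrier_mat (d i) (d i) \<and> invertible_mat (minv (V' (Inr i)) * V (Inr i))"
        using mult_carrier_mat[OF B(1) A(3)] minv_mult(1)[OF B A(3,4)] by blast
      then show ?thesis using so SO_D[OF so(2)] by (simp add: fibh_def Qt_simps)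
    qed
  qed
  moreover have "\<forall>v. v \<notin> qverts Qt \<longrightarrow> fibh V V' v = 1\<^sub>m 0"
  proof (intro allI impI)
    fix v assume "v \<notin> qverts Qt"
    then show "fibh V V' v = 1\<^sub>m 0" using W_D by (cases v) (auto simp: Qt_simps fibh_def image_iff)
  qed
  ultimately show ?thesis unfolding GL_def by blast
qed

lemma fiber: assumes V: "V \<in> U" and V': "V' \<in> U" and eq: "pii V = pii V'"
  shows "act Qt (fibh V V') V = V'"
proof (rule U_ext[OF act_U[OF V fibh_GL[OF V V']] V'])
  fix i assume i: "i \<in> {1..n}"
  have im: "i - 1 \<le> n" using i by auto
  have pe: "pii V i = pii V' i" using eq by simp
  have ia: "Inl i \<in> qarrs Qt" using i by (simp add: Qt_simps)
  consider (sk) "i \<in> SK" | (so) "i \<in> SO" | (ot) "i \<notin> W" using W_D by blast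
  then show "act Qt (fibh V V') V (Inl i) = V' (Inl i)"
  proof cases
    case sk
    note s = SK_D[OF sk] Qt_sink[OF sk] sk im
    have e: "minv (V (Inr i)) * V (Inl i) = minv (V' (Inr i)) * V' (Inl i)" using pe s i by (simp add: piQ_def)
    have "(V' (Inr i) * minv (V (Inr i))) * V (Inl i) * minv (1\<^sub>m (d (i - 1))) = V' (Inl i)"
      using U_sink[OF V sk] U_sink[OF V' sk] e by (intro fib_sink_calc) auto
    then show ?thesis using ia s by (simp add: act_def fibh_def)
  next
    case so
    note s = SO_D[OF so] Qt_source[OF so] so im
    have e: "V (Inl i) * minv (V (Inr i)) = V' (Inl i) * minv (V' (Inr i))" using pe s i by (simp add: piQ_def)
    have "1\<^sub>m (d (i - 1)) * V (Inl i) * minv (minv (V' (Inr i)) * V (Inr i)) = V' (Inl i)"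
      using U_source[OF V so] U_source[OF V' so] e by (intro fib_source_calc) auto
    then show ?thesis using ia s by (simp add: act_def fibh_def)
  next
    case ot
    have eq1: "V (Inl i) = V' (Inl i)" using pe ot i W_D[of i] by (simp add: piQ_def)
    have c: "V' (Inl i) \<in> carrier_mat (d (qtgt Q i)) (d (qsrc Q i))" using U_other[OF V' i ot] .
    have "act Qt (fibh V V') V (Inl i) = 1\<^sub>m (d (qtgt Q i)) * V (Inl i) * minv (1\<^sub>m (d (qsrc Q i)))"
      using ia ot Qt_other[OF ot] Q_bounds[OF i] by (simp add: act_def fibh_def)
    also have "\<dots> = V' (Inl i)"
      unfolding eq1 one_invertible(2) using left_mult_one_mat[OF c] right_mult_one_mat[OF c] by simp
    finally show ?thesis .
  qed
next
  fix i assume i: "i \<in> W"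
  have ia: "Inr i \<in> qarrs Qt" using i by (simp add: Qt_simps)
  consider (sk) "i \<in> SK" | (so) "i \<in> SO" using W_D i by blast
  then show "act Qt (fibh V V') V (Inr i) = V' (Inr i)"
  proof cases
    case sk
    note s = SK_D[OF sk] Qt_sink[OF sk] sk
    have "(V' (Inr i) * minv (V (Inr i))) * V (Inr i) * minv (1\<^sub>m (d i)) = V' (Inr i)"
      using U_sink[OF V sk] U_sink[OF V' sk] by (intro fib_sink_calc2) auto
    then show ?thesis using ia s by (simp add: act_def fibh_def)
  next
    case so
    note s = SO_D[OF so] Qt_source[OF so] so
    have "1\<^sub>m (d i) * V (Inr i) * minv (minv (V' (Inr i)) * V (Inr i)) = V' (Inr i)"
      using U_source[OF V so] U_source[OF V' so] by (intro fib_source_calc2) auto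
    then show ?thesis using ia s by (simp add: act_def fibh_def)
  qed
qed

end

context qs begin

lemma orbit_U: assumes V: "V \<in> U" shows "U \<inter> pii -` (orbit Q d (pii V)) = orbit Qt dt V"
proof
  show "orbit Qt dt V \<subseteq> U \<inter> pii -` (orbit Q d (pii V))"
  proof
    fix V' assume "V' \<in> orbit Qt dt V"
    then obtain h where h: "h \<in> GL Qt dt" and V': "V' = act Qt h V" unfolding orbit_def by blast
    show "V' \<in> U \<inter> pii -` (orbit Q d (pii V))"
      using act_U[OF V h] pi_act[OF V h] res_GL[OF h] V' unfolding orbit_def by blast
  qed
next
  show "U \<inter> pii -` (orbit Q d (pii V)) \<subseteq> orbit Qt dt V"
  proof
    fix V' assume V': "V' \<in> U \<inter> pii -` (orbit Q d (pii V))"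
    then obtain k where k: "k \<in> GL Q d" and e: "pii V' = act Q k (pii V)" unfolding orbit_def by blast
    note h1 = ext_GL[OF k]
    have V1: "act Qt (ext k) V \<in> U" by (rule act_U[OF V h1])
    have "pii (act Qt (ext k) V) = pii V'" using pi_act[OF V h1] res_ext[OF k] e by simp
    then have "act Qt (fibh (act Qt (ext k) V) V') (act Qt (ext k) V) = V'"
      using fiber[OF V1] V' by blast
    moreover have h2: "fibh (act Qt (ext k) V) V' \<in> GL Qt dt" using fibh_GL[OF V1] V' by blast
    ultimately have "V' = act Qt (\<lambda>v. fibh (act Qt (ext k) V) V' v * ext k v) V"
      using act_comp[OF V h1 h2] by simp
    then show "V' \<in> orbit Qt dt V" using GL_mult[OF h1 h2] unfolding orbit_def by blast
  qed
qed

lemma orbit_pi: assumes V: "V \<in> U" shows "pii ` orbit Qt dt V = orbit Q d (pii V)"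
proof
  show "pii ` orbit Qt dt V \<subseteq> orbit Q d (pii V)"
    using orbit_U[OF V] by blast
  show "orbit Q d (pii V) \<subseteq> pii ` orbit Qt dt V"
  proof
    fix X assume "X \<in> orbit Q d (pii V)"
    then obtain k where k: "k \<in> GL Q d" and X: "X = act Q k (pii V)" unfolding orbit_def by blast
    have "X = pii (act Qt (ext k) V)" using pi_act[OF V ext_GL[OF k]] res_ext[OF k] X by simp
    then show "X \<in> pii ` orbit Qt dt V" using ext_GL[OF k] unfolding orbit_def by blast
  qed
qed

lemma orbit_R: "X \<in> R \<Longrightarrow> orbit Q d X \<subseteq> R"
  using act_R unfolding orbit_def by blast

definition one_g :: "nat \<Rightarrow> 'a::field mat" where "one_g = (\<lambda>i. if i \<in> W then 1\<^sub>m (d i) else 1\<^sub>m 0)"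

lemma one_g_G: "one_g \<in> G"
  unfolding one_g_def G_def Gstar_def using one_invertible by auto

lemma pi_surj: "X \<in> R \<Longrightarrow> sec one_g X \<in> U \<and> pii (sec one_g X) = X"
  using sec_U[OF one_g_G, of X] pi_sec[OF one_g_G, of X] by simp

lemma pi_img: "C \<subseteq> R \<Longrightarrow> pii ` (U \<inter> pii -` C) = C"
proof
  assume C: "C \<subseteq> R"
  show "pii ` (U \<inter> pii -` C) \<subseteq> C" by auto
  show "C \<subseteq> pii ` (U \<inter> pii -` C)"
  proof
    fix X assume X: "X \<in> C"
    then have "X \<in> R" using C by auto
    then have "sec one_g X \<in> U \<inter> pii -` C" "pii (sec one_g X) = X" using pi_surj[of X] X by auto
    then show "X \<in> pii ` (U \<inter> pii -` C)" by (metis image_eqI)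
  qed
qed

end

context qs begin

abbreviation "CR \<equiv> rep_coords Q d"
abbreviation "CU \<equiv> rep_coords Qt dt"
abbreviation "GC \<equiv> Gstar_coords n fw d"
abbreviation "PC \<equiv> prod_coords GC CR"

lemma coordU: "a \<in> qarrs Qt \<Longrightarrow> i < dt (qtgt Qt a) \<Longrightarrow> j < dt (qsrc Qt a) \<Longrightarrow> poly_on CU S (\<lambda>V. V a $$ (i,j))"
  by (rule poly_on_coord) (auto simp: rep_coords_def)

lemma gcoord: "b \<in> W \<Longrightarrow> r < d b \<Longrightarrow> s < d b \<Longrightarrow> poly_on PC S (\<lambda>x. fst x b $$ (r,s))"
proof -
  assume "b \<in> W" "r < d b" "s < d b"
  then have "(\<lambda>g. g b $$ (r,s)) \<in> GC" unfolding Gstar_coords_def by blast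
  then have "(\<lambda>x. fst x b $$ (r,s)) \<in> PC" unfolding prod_coords_def
    by (intro UnI1 CollectI exI[of _ "\<lambda>g. g b $$ (r,s)"]) simp
  then show ?thesis by (rule poly_on_coord)
qed

lemma rcoord: "b \<in> {1..n} \<Longrightarrow> r < d (qtgt Q b) \<Longrightarrow> s < d (qsrc Q b) \<Longrightarrow> poly_on PC S (\<lambda>x. snd x b $$ (r,s))"
proof -
  assume "b \<in> {1..n}" "r < d (qtgt Q b)" "s < d (qsrc Q b)"
  then have "(\<lambda>X. X b $$ (r,s)) \<in> CR" unfolding rep_coords_def
    by (intro CollectI exI[of _ b] exI[of _ r] exI[of _ s]) (auto simp: Qt_simps)
  then have "(\<lambda>x. snd x b $$ (r,s)) \<in> PC" unfolding prod_coords_def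
    by (intro UnI2 CollectI exI[of _ "\<lambda>X. X b $$ (r,s)"]) simp
  then show ?thesis by (rule poly_on_coord)
qed

lemma C1: assumes c: "c \<in> CR" shows "frac_on CU U (\<lambda>V. c (pii V))"
proof -
  from c obtain a i j where a: "a \<in> {1..n}" and i: "i < d (qtgt Q a)" and j: "j < d (qsrc Q a)"
    and ce: "c = (\<lambda>X. X a $$ (i,j))" unfolding rep_coords_def by (auto simp: Qt_simps)
  have ia: "Inl a \<in> qarrs Qt" using a by (simp add: Qt_simps)
  consider (sk) "a \<in> SK" | (so) "a \<in> SO" | (ot) "a \<notin> W" using W_D by blast
  then have "frac_on CU U (\<lambda>V. pii V a $$ (i,j))"
  proof cases
    case sk
    note s = SK_D[OF sk] Qt_sink[OF sk]
    have ir: "Inr a \<in> qarrs Qt" using s by (simp add: Qt_simps)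
    have "frac_on CU U (\<lambda>V. (minv (V (Inr a)) * V (Inl a)) $$ (i,j))"
    proof (rule frac_on_mult_entry[where r = "d a" and m = "d a" and c = "d (a - 1)"])
      fix V assume V: "V \<in> U"
      show "minv (V (Inr a)) \<in> carrier_mat (d a) (d a) \<and> V (Inl a) \<in> carrier_mat (d a) (d (a - 1))"
        using U_sink[OF V sk] minv_props(1)[of "V (Inr a)" "d a"] by auto
    next
      fix k assume k: "k < d a"
      show "frac_on CU U (\<lambda>V. minv (V (Inr a)) $$ (i,k))"
      proof (rule frac_on_minv_entry[where k = "d a"])
        show "\<And>V. V \<in> U \<Longrightarrow> V (Inr a) \<in> carrier_mat (d a) (d a) \<and> invertible_mat (V (Inr a))"
          using U_sink sk by blast
        show "\<And>i j. i < d a \<Longrightarrow> j < d a \<Longrightarrow> poly_on CU U (\<lambda>x. x (Inr a) $$ (i, j))"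
          using ir s by (intro coordU) (auto simp: Qt_simps)
      qed (use i s k in \<open>auto simp: Qt_simps\<close>)
      show "frac_on CU U (\<lambda>V. V (Inl a) $$ (k,j))"
        using ia s k j by (intro frac_on_poly coordU) (auto simp: Qt_simps)
    qed (use i j s in \<open>auto simp: Qt_simps\<close>)
    then show ?thesis using a sk by (simp add: piQ_def)
  next
    case so
    note s = SO_D[OF so] Qt_source[OF so]
    have ir: "Inr a \<in> qarrs Qt" using s by (simp add: Qt_simps)
    have "frac_on CU U (\<lambda>V. (V (Inl a) * minv (V (Inr a))) $$ (i,j))"
    proof (rule frac_on_mult_entry[where r = "d (a - 1)" and m = "d a" and c = "d a"])
      fix V assume V: "V \<in> U"
      show "V (Inl a) \<in> carrier_mat (d (a - 1)) (d a) \<and> minv (V (Inr a)) \<in> carrier_mat (d a) (d a)"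
        using U_source[OF V so] minv_props(1)[of "V (Inr a)" "d a"] by auto
    next
      fix k assume k: "k < d a"
      show "frac_on CU U (\<lambda>V. minv (V (Inr a)) $$ (k,j))"
      proof (rule frac_on_minv_entry[where k = "d a"])
        show "\<And>V. V \<in> U \<Longrightarrow> V (Inr a) \<in> carrier_mat (d a) (d a) \<and> invertible_mat (V (Inr a))"
          using U_source so by blast
        show "\<And>i j. i < d a \<Longrightarrow> j < d a \<Longrightarrow> poly_on CU U (\<lambda>x. x (Inr a) $$ (i, j))"
          using ir s by (intro coordU) (auto simp: Qt_simps)
      qed (use j s k in \<open>auto simp: Qt_simps\<close>)
      show "frac_on CU U (\<lambda>V. V (Inl a) $$ (i,k))"
        using ia s k i by (intro frac_on_poly coordU) (auto simp: Qt_simps)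
    qed (use i j s in \<open>auto simp: Qt_simps\<close>)
    then show ?thesis using a so s by (simp add: piQ_def)
  next
    case ot
    have "frac_on CU U (\<lambda>V. V (Inl a) $$ (i,j))"
      using ia i j Qt_other[OF ot] by (intro frac_on_poly coordU) (auto simp: Qt_simps)
    then show ?thesis using a ot W_D[of a] by (simp add: piQ_def)
  qed
  then show ?thesis using ce by simp
qed

lemma C2: assumes c: "c \<in> CU" shows "poly_on PC (G \<times> R) (\<lambda>x. c (sec (fst x) (snd x)))"
proof -
  from c obtain a i j where a: "a \<in> qarrs Qt" and i: "i < dt (qtgt Qt a)" and j: "j < dt (qsrc Qt a)"
    and ce: "c = (\<lambda>V. V a $$ (i,j))" unfolding rep_coords_def by auto
  from a consider (l) b where "a = Inl b" "b \<in> {1..n}" | (r) b where "a = Inr b" "b \<in> W"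
    by (auto simp: Qt_simps)
  then have "poly_on PC (G \<times> R) (\<lambda>x. sec (fst x) (snd x) a $$ (i,j))"
  proof cases
    case l
    consider (sk) "b \<in> SK" | (so) "b \<in> SO" | (ot) "b \<notin> W" using W_D by blast
    then show ?thesis
    proof cases
      case sk
      note s = SK_D[OF sk] Qt_sink[OF sk]
      have "poly_on PC (G \<times> R) (\<lambda>x. (fst x b * snd x b) $$ (i,j))"
      proof (rule poly_on_mult_entry[where r = "d b" and m = "d b" and c = "d (b - 1)"])
        fix x assume x: "x \<in> G \<times> R"
        show "fst x b \<in> carrier_mat (d b) (d b) \<and> snd x b \<in> carrier_mat (d b) (d (b - 1))"
          using x G_in[of "fst x" b] R_in[of "snd x" b] s by (auto simp: Qt_simps)
      next
        fix k assume k: "k < d b"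
        show "poly_on PC (G \<times> R) (\<lambda>x. fst x b $$ (i,k))" using l s i k by (intro gcoord) (auto simp: Qt_simps)
        show "poly_on PC (G \<times> R) (\<lambda>x. snd x b $$ (k,j))" using l s j k by (intro rcoord) (auto simp: Qt_simps)
      qed (use l i j s in \<open>auto simp: Qt_simps\<close>)
      then show ?thesis using l sk s by (simp add: sec_def)
    next
      case so
      note s = SO_D[OF so] Qt_source[OF so]
      have "poly_on PC (G \<times> R) (\<lambda>x. (snd x b * fst x b) $$ (i,j))"
      proof (rule poly_on_mult_entry[where r = "d (b - 1)" and m = "d b" and c = "d b"])
        fix x assume x: "x \<in> G \<times> R"
        show "snd x b \<in> carrier_mat (d (b - 1)) (d b) \<and> fst x b \<in> carrier_mat (d b) (d b)"
          using x G_in[of "fst x" b] R_in[of "snd x" b] s by (auto simp: Qt_simps)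
      next
        fix k assume k: "k < d b"
        show "poly_on PC (G \<times> R) (\<lambda>x. fst x b $$ (k,j))" using l s j k by (intro gcoord) (auto simp: Qt_simps)
        show "poly_on PC (G \<times> R) (\<lambda>x. snd x b $$ (i,k))" using l s i k by (intro rcoord) (auto simp: Qt_simps)
      qed (use l i j s in \<open>auto simp: Qt_simps\<close>)
      then show ?thesis using l so s by (simp add: sec_def)
    next
      case ot
      have "poly_on PC (G \<times> R) (\<lambda>x. snd x b $$ (i,j))"
        using l i j Qt_other[OF ot] by (intro rcoord) (auto simp: Qt_simps)
      then show ?thesis using l ot W_D[of b] by (simp add: sec_def)
    qed
  next
    case r
    have "poly_on PC (G \<times> R) (\<lambda>x. fst x b $$ (i,j))"
      using r i j Inr_dims[of b] by (intro gcoord) auto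
    then show ?thesis using r by (simp add: sec_def)
  qed
  then show ?thesis using ce by simp
qed

lemma C3: assumes c: "c \<in> PC" shows "frac_on CU U (\<lambda>V. c (gpart V, pii V))"
proof -
  from c consider (g) f where "f \<in> GC" "c = (\<lambda>x. f (fst x))" | (r) f where "f \<in> CR" "c = (\<lambda>x. f (snd x))"
    unfolding prod_coords_def by blast
  then show ?thesis
  proof cases
    case g
    then obtain b r s where b: "b \<in> W" "r < d b" "s < d b" and f: "f = (\<lambda>g. g b $$ (r,s))"
      unfolding Gstar_coords_def by blast
    have "poly_on CU U (\<lambda>V. V (Inr b) $$ (r,s))"
      using b Inr_dims[of b] by (intro coordU) (auto simp: Qt_simps)
    then have "frac_on CU U (\<lambda>V. V (Inr b) $$ (r,s))" by (rule frac_on_poly)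
    then show ?thesis using g f b by (simp add: gpart_def)
  next
    case r
    then show ?thesis using C1[of f] by simp
  qed
qed

lemma zcl_sub: "zcl C X A \<subseteq> X"
  unfolding zcl_def by auto

lemma zcl_pre: assumes A: "A \<subseteq> R"
  shows "zcl CU U (U \<inter> pii -` A) = U \<inter> pii -` (zcl CR R A)"
proof
  show "zcl CU U (U \<inter> pii -` A) \<subseteq> U \<inter> pii -` (zcl CR R A)"
  proof
    fix x assume x: "x \<in> zcl CU U (U \<inter> pii -` A)"
    then have xU: "x \<in> U" and xv: "\<And>f. f \<in> polys CU \<Longrightarrow> (\<forall>y\<in>U \<inter> pii -` A. f y = 0) \<Longrightarrow> f x = 0"
      unfolding zcl_def by auto
    have "pii x \<in> zcl CR R A"
      unfolding zcl_def
    proof (intro CollectI conjI ballI impI)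
      show "pii x \<in> R" by (rule pi_R[OF xU])
      fix p assume p: "p \<in> polys CR" and pv: "\<forall>y\<in>A. p y = 0"
      have "frac_on CU U (\<lambda>V. p (pii V))" by (rule frac_on_comp[OF C1 p])
      then obtain P Qd where P: "P \<in> polys CU" and Qd: "Qd \<in> polys CU"
        and h: "\<forall>V\<in>U. Qd V \<noteq> 0 \<and> p (pii V) = P V / Qd V" unfolding frac_on_def by blast
      have "\<forall>y\<in>U \<inter> pii -` A. P y = 0"
      proof
        fix y assume y: "y \<in> U \<inter> pii -` A"
        then have "p (pii y) = 0" using pv by auto
        then show "P y = 0" using h y by auto
      qed
      then have "P x = 0" using xv[OF P] by blast
      then show "p (pii x) = 0" using h xU by auto
    qed
    then show "x \<in> U \<inter> pii -` (zcl CR R A)" using xU by auto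
  qed
next
  show "U \<inter> pii -` (zcl CR R A) \<subseteq> zcl CU U (U \<inter> pii -` A)"
  proof
    fix x assume x: "x \<in> U \<inter> pii -` (zcl CR R A)"
    then have xU: "x \<in> U" and xz: "pii x \<in> zcl CR R A" by auto
    show "x \<in> zcl CU U (U \<inter> pii -` A)"
      unfolding zcl_def
    proof (intro CollectI conjI ballI impI)
      show "x \<in> U" by (rule xU)
      fix f assume f: "f \<in> polys CU" and fv: "\<forall>y\<in>U \<inter> pii -` A. f y = 0"
      have "poly_on PC (G \<times> R) (\<lambda>z. f (sec (fst z) (snd z)))" by (rule poly_on_comp[OF C2 f])
      then obtain p where p: "p \<in> polys PC" and pe: "\<forall>z\<in>G \<times> R. f (sec (fst z) (snd z)) = p z"
        unfolding poly_on_def by blast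
      define g0 where "g0 = gpart x"
      have g0: "g0 \<in> G" unfolding g0_def by (rule gpart_G[OF xU])
      have q: "(\<lambda>X. p (g0, X)) \<in> polys CR" by (rule polys_fix_fst[OF p])
      have "\<forall>y\<in>A. p (g0, y) = 0"
      proof
        fix y assume y: "y \<in> A"
        then have yR: "y \<in> R" using A by auto
        have "sec g0 y \<in> U \<inter> pii -` A" using sec_U[OF g0 yR] pi_sec[OF g0 yR] y by auto
        then have "f (sec g0 y) = 0" using fv by blast
        then show "p (g0, y) = 0" using pe g0 yR by auto
      qed
      then have "p (g0, pii x) = 0" using xz q unfolding zcl_def by auto
      moreover have "f x = p (g0, pii x)"
        using pe g0 pi_R[OF xU] sec_gpart[OF xU] unfolding g0_def by force
      ultimately show "f x = 0" by simp
    qed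
  qed
qed

end

context qs begin

lemma orbR_sub: assumes "Ob \<in> orbits_in Q d R" shows "Ob \<subseteq> R"
proof -
  from assms obtain X where X: "X \<in> R" and Ob: "Ob = orbit Q d X" unfolding orbits_in_def by blast
  then show ?thesis using orbit_R[OF X] by simp
qed

lemma orbR_img: assumes "Ob \<in> orbits_in Q d R" shows "U \<inter> pii -` Ob \<in> orbits_in Qt dt U"
proof -
  from assms obtain X where X: "X \<in> R" and Ob: "Ob = orbit Q d X" unfolding orbits_in_def by blast
  have "U \<inter> pii -` Ob = orbit Qt dt (sec one_g X)" using orbit_U[of "sec one_g X"] pi_surj[OF X] Ob by simp
  then show ?thesis using pi_surj[OF X] unfolding orbits_in_def
    by (intro CollectI exI[of _ "sec one_g X"]) simp
qed

lemma orbU_rep: assumes "P \<in> orbits_in Qt dt U" shows "\<exists>Ob \<in> orbits_in Q d R. P = U \<inter> pii -` Ob \<and> pii ` P = Ob"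
proof -
  from assms obtain V where V: "V \<in> U" and P: "P = orbit Qt dt V" unfolding orbits_in_def by blast
  have "orbit Q d (pii V) \<in> orbits_in Q d R" using pi_R[OF V] unfolding orbits_in_def
    by (intro CollectI exI[of _ "pii V"]) simp
  then show ?thesis using orbit_U[OF V] orbit_pi[OF V] P by (intro bexI[of _ "orbit Q d (pii V)"]) simp_all
qed

lemma main:
  shows
    "bij_betw (\<lambda>Ob. U \<inter> pii -` Ob) (orbits_in Q d R) (orbits_in Qt dt U)
     \<and> (\<forall>Ob \<in> orbits_in Q d R. pii ` (U \<inter> pii -` Ob) = Ob)
     \<and> (\<forall>P \<in> orbits_in Qt dt U. U \<inter> pii -` (pii ` P) = P)
     \<and> bij_betw (\<lambda>C. U \<inter> pii -` C)
         {zcl CR R Ob | Ob. Ob \<in> orbits_in Q d R}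
         {zcl CU U P | P. P \<in> orbits_in Qt dt U}
     \<and> (\<forall>Ob \<in> orbits_in Q d R. pii ` (U \<inter> pii -` (zcl CR R Ob)) = zcl CR R Ob)
     \<and> (\<forall>P \<in> orbits_in Qt dt U. U \<inter> pii -` (pii ` (zcl CU U P)) = zcl CU U P)
     \<and> (\<forall>Ob \<in> orbits_in Q d R.
          var_iso CU (zcl CU U (U \<inter> pii -` Ob))
                  PC (G \<times> zcl CR R Ob))"
proof (intro conjI)
  have img: "\<And>C. C \<subseteq> R \<Longrightarrow> pii ` (U \<inter> pii -` C) = C" by (rule pi_img)
  show P2: "\<forall>Ob \<in> orbits_in Q d R. pii ` (U \<inter> pii -` Ob) = Ob"
  proof
    fix Ob assume "Ob \<in> orbits_in Q d R"
    then show "pii ` (U \<inter> pii -` Ob) = Ob" by (rule img[OF orbR_sub])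
  qed
  show "bij_betw (\<lambda>Ob. U \<inter> pii -` Ob) (orbits_in Q d R) (orbits_in Qt dt U)"
    unfolding bij_betw_def
  proof
    show "inj_on (\<lambda>Ob. U \<inter> pii -` Ob) (orbits_in Q d R)"
      by (rule inj_on_inverseI[where g = "\<lambda>P. pii ` P"]) (use P2 in auto)
    show "(\<lambda>Ob. U \<inter> pii -` Ob) ` orbits_in Q d R = orbits_in Qt dt U"
    proof
      show "(\<lambda>Ob. U \<inter> pii -` Ob) ` orbits_in Q d R \<subseteq> orbits_in Qt dt U"
        using orbR_img by auto
      show "orbits_in Qt dt U \<subseteq> (\<lambda>Ob. U \<inter> pii -` Ob) ` orbits_in Q d R"
      proof
        fix P assume P: "P \<in> orbits_in Qt dt U"
        obtain Ob where "Ob \<in> orbits_in Q d R" "P = U \<inter> pii -` Ob" using orbU_rep[OF P] by blast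
        then show "P \<in> (\<lambda>Ob. U \<inter> pii -` Ob) ` orbits_in Q d R" by simp
      qed
    qed
  qed
  show "\<forall>P \<in> orbits_in Qt dt U. U \<inter> pii -` (pii ` P) = P"
  proof
    fix P assume P: "P \<in> orbits_in Qt dt U"
    obtain Ob where "P = U \<inter> pii -` Ob" "pii ` P = Ob" using orbU_rep[OF P] by blast
    then show "U \<inter> pii -` (pii ` P) = P" by simp
  qed
  have zp: "\<And>Ob. Ob \<in> orbits_in Q d R \<Longrightarrow> U \<inter> pii -` (zcl CR R Ob) = zcl CU U (U \<inter> pii -` Ob)"
    by (rule sym, rule zcl_pre[OF orbR_sub])
  have zimg: "\<And>Ob. pii ` (U \<inter> pii -` (zcl CR R Ob)) = zcl CR R Ob" by (rule img[OF zcl_sub])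
  show "\<forall>Ob \<in> orbits_in Q d R. pii ` (U \<inter> pii -` (zcl CR R Ob)) = zcl CR R Ob" by (intro ballI) (rule zimg)
  show "bij_betw (\<lambda>C. U \<inter> pii -` C) {zcl CR R Ob | Ob. Ob \<in> orbits_in Q d R} {zcl CU U P | P. P \<in> orbits_in Qt dt U}"
    unfolding bij_betw_def
  proof
    show "inj_on (\<lambda>C. U \<inter> pii -` C) {zcl CR R Ob | Ob. Ob \<in> orbits_in Q d R}"
      by (rule inj_on_inverseI[where g = "\<lambda>P. pii ` P"]) (use zimg in auto)
    show "(\<lambda>C. U \<inter> pii -` C) ` {zcl CR R Ob | Ob. Ob \<in> orbits_in Q d R} = {zcl CU U P | P. P \<in> orbits_in Qt dt U}"
    proof
      show "(\<lambda>C. U \<inter> pii -` C) ` {zcl CR R Ob | Ob. Ob \<in> orbits_in Q d R} \<subseteq> {zcl CU U P | P. P \<in> orbits_in Qt dt U}"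
      proof
        fix Z assume "Z \<in> (\<lambda>C. U \<inter> pii -` C) ` {zcl CR R Ob | Ob. Ob \<in> orbits_in Q d R}"
        then obtain Ob where Ob: "Ob \<in> orbits_in Q d R" and Z: "Z = U \<inter> pii -` (zcl CR R Ob)" by blast
        have "Z = zcl CU U (U \<inter> pii -` Ob)" using zp[OF Ob] Z by simp
        then show "Z \<in> {zcl CU U P | P. P \<in> orbits_in Qt dt U}" using orbR_img[OF Ob]
          by (intro CollectI exI[of _ "U \<inter> pii -` Ob"]) simp
      qed
      show "{zcl CU U P | P. P \<in> orbits_in Qt dt U} \<subseteq> (\<lambda>C. U \<inter> pii -` C) ` {zcl CR R Ob | Ob. Ob \<in> orbits_in Q d R}"
      proof
        fix Z assume "Z \<in> {zcl CU U P | P. P \<in> orbits_in Qt dt U}"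
        then obtain P where P: "P \<in> orbits_in Qt dt U" and Z: "Z = zcl CU U P" by blast
        obtain Ob where Ob: "Ob \<in> orbits_in Q d R" and PO: "P = U \<inter> pii -` Ob" using orbU_rep[OF P] by blast
        have "Z = U \<inter> pii -` (zcl CR R Ob)" using zp[OF Ob] Z PO by simp
        then show "Z \<in> (\<lambda>C. U \<inter> pii -` C) ` {zcl CR R Ob | Ob. Ob \<in> orbits_in Q d R}" using Ob
          by (intro image_eqI[of _ _ "zcl CR R Ob"]) auto
      qed
    qed
  qed
  show "\<forall>P \<in> orbits_in Qt dt U. U \<inter> pii -` (pii ` (zcl CU U P)) = zcl CU U P"
  proof
    fix P assume P: "P \<in> orbits_in Qt dt U"
    obtain Ob where Ob: "Ob \<in> orbits_in Q d R" and PO: "P = U \<inter> pii -` Ob" using orbU_rep[OF P] by blast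
    have "zcl CU U P = U \<inter> pii -` (zcl CR R Ob)" using zp[OF Ob] PO by simp
    then show "U \<inter> pii -` (pii ` (zcl CU U P)) = zcl CU U P" using zimg[of Ob] by simp
  qed
  show "\<forall>Ob \<in> orbits_in Q d R. var_iso CU (zcl CU U (U \<inter> pii -` Ob)) PC (G \<times> zcl CR R Ob)"
  proof
    fix Ob assume Ob: "Ob \<in> orbits_in Q d R"
    let ?Y = "zcl CU U (U \<inter> pii -` Ob)" and ?Z = "(G :: (nat \<Rightarrow> 'i mat) set) \<times> zcl CR R Ob"
    have Y: "?Y = U \<inter> pii -` (zcl CR R Ob)" by (rule zp[OF Ob, symmetric])
    have ZR: "?Z \<subseteq> G \<times> R" using zcl_sub[of CR R Ob] by auto
    let ?F = "\<lambda>V::nat + nat \<Rightarrow> 'i mat. (gpart V, pii V)" and ?H = "\<lambda>z::(nat \<Rightarrow> 'i mat) \<times> (nat \<Rightarrow> 'i mat). sec (fst z) (snd z)"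
    have r1: "regular_map CU ?Y PC ?Z ?F"
      unfolding regular_map_def
    proof
      show "?F ` ?Y \<subseteq> ?Z" unfolding Y using gpart_G by auto
      show "\<forall>c\<in>PC. regular_fun CU ?Y (\<lambda>x. c (?F x))"
      proof
        fix c :: "(nat \<Rightarrow> 'i mat) \<times> (nat \<Rightarrow> 'i mat) \<Rightarrow> 'i" assume c: "c \<in> PC"
        have "frac_on CU U (\<lambda>V. c (gpart V, pii V))" using c by (rule C3)
        then have "frac_on CU ?Y (\<lambda>V. c (gpart V, pii V))" by (rule frac_on_subset) (rule zcl_sub)
        then show "regular_fun CU ?Y (\<lambda>x. c (?F x))" by (rule frac_on_regular)
      qed
    qed
    have r2: "regular_map PC ?Z CU ?Y ?H"
      unfolding regular_map_def
    proof
      show "?H ` ?Z \<subseteq> ?Y"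
      proof
        fix V assume "V \<in> ?H ` ?Z"
        then obtain g X where g: "g \<in> G" and X: "X \<in> zcl CR R Ob" and V: "V = sec g X" by auto
        have XR: "X \<in> R" using X zcl_sub[of CR R Ob] by auto
        show "V \<in> ?Y" unfolding Y using sec_U[OF g XR] pi_sec[OF g XR] X V by simp
      qed
      show "\<forall>c\<in>CU. regular_fun PC ?Z (\<lambda>x. c (?H x))"
      proof
        fix c :: "(nat + nat \<Rightarrow> 'i mat) \<Rightarrow> 'i" assume c: "c \<in> CU"
        have "poly_on PC (G \<times> R) (\<lambda>x. c (sec (fst x) (snd x)))" using c by (rule C2)
        then have "poly_on PC ?Z (\<lambda>x. c (sec (fst x) (snd x)))" using ZR by (rule poly_on_subset)
        then show "regular_fun PC ?Z (\<lambda>x. c (?H x))" by (intro frac_on_regular frac_on_poly)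
      qed
    qed
    have r3: "\<forall>x\<in>?Y. ?H (?F x) = x"
    proof
      fix x assume "x \<in> ?Y" then have "x \<in> U" unfolding Y by simp
      then show "?H (?F x) = x" using sec_gpart by simp
    qed
    have r4: "\<forall>y\<in>?Z. ?F (?H y) = y"
    proof
      fix y assume "y \<in> ?Z"
      then obtain g X where g: "g \<in> G" and X: "X \<in> zcl CR R Ob" and y: "y = (g, X)" by auto
      have XR: "X \<in> R" using X zcl_sub[of CR R Ob] by auto
      show "?F (?H y) = y" using gpart_sec[OF g] pi_sec[OF g XR] y by simp
    qed
    show "var_iso CU ?Y PC ?Z" unfolding var_iso_def
      apply (intro exI[of _ ?F] exI[of _ ?H])
      using r1 r2 r3 r4 by blast
  qed
qed

end

theorem theorem5p3:
  fixes n :: nat and fw :: "nat \<Rightarrow> bool" and d :: "nat \<Rightarrow> nat"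
  defines "Q \<equiv> typeA n fw" and "Qt \<equiv> tildeQ n fw" and "dt \<equiv> tilde_dim d"
  defines "U \<equiv> (Uset n fw d :: (nat + nat \<Rightarrow> 'a::field mat) set)" and "\<pi> \<equiv> piQ n fw"
  defines "R \<equiv> (rep_space Q d :: (nat \<Rightarrow> 'a mat) set)"
  defines "CR \<equiv> rep_coords Q d" and "CU \<equiv> rep_coords Qt dt"
  shows
    "bij_betw (\<lambda>Ob. U \<inter> \<pi> -` Ob) (orbits_in Q d R) (orbits_in Qt dt U)
     \<and> (\<forall>Ob \<in> orbits_in Q d R. \<pi> ` (U \<inter> \<pi> -` Ob) = Ob)
     \<and> (\<forall>P \<in> orbits_in Qt dt U. U \<inter> \<pi> -` (\<pi> ` P) = P)
     \<and> bij_betw (\<lambda>C. U \<inter> \<pi> -` C)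
         {zcl CR R Ob | Ob. Ob \<in> orbits_in Q d R}
         {zcl CU U P | P. P \<in> orbits_in Qt dt U}
     \<and> (\<forall>Ob \<in> orbits_in Q d R. \<pi> ` (U \<inter> \<pi> -` (zcl CR R Ob)) = zcl CR R Ob)
     \<and> (\<forall>P \<in> orbits_in Qt dt U. U \<inter> \<pi> -` (\<pi> ` (zcl CU U P)) = zcl CU U P)
     \<and> (\<forall>Ob \<in> orbits_in Q d R.
          var_iso CU (zcl CU U (U \<inter> \<pi> -` Ob))
                  (prod_coords (Gstar_coords n fw d) CR) (Gstar n fw d \<times> zcl CR R Ob))"
  using qs.main[of n fw d]
  unfolding qs.U_def qs.R_def qs.G_def Q_def Qt_def dt_def U_def \<pi>_def R_def CR_def CU_def .

end
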